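(* Let $H$ be an $n\times n$ Hermitian matrix and let $M=H+aJ$, where $a$ is a real number and $J$ is the $n\times n$ all-ones matrix. Let $\tau_1<\tau_2<\cdots<\tau_r$ be the distinct main eigenvalues of $H$, let $\beta_i$ be the main angle of $\tau_i$ (as an eigenvalue of $H$), and let $\mu_1<\mu_2<\cdots<\mu_s$ be the distinct main eigenvalues of $M$. Then $r=s$, and \[ \prod_{i=1}^r(\mu_i-x)=\prod_{i=1}^r(\tau_i-x)\Big(1+a\sum_{j=1}^r\frac{n\beta_j^2}{\tau_j-x}\Big). \] Moreover, if $a>0$ then $\tau_1<\mu_1<\tau_2<\mu_2<\cdots<\tau_r<\mu_r$, and if $a<0$ then $\mu_1<\tau_1<\mu_2<\tau_2<\cdots<\mu_r<\tau_r$.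
   Context: For an $n\times n$ Hermitian matrix $H$ with distinct eigenvalues $\theta_1<\cdots<\theta_t$, let $E_i$ be the orthogonal projection onto the eigenspace of $\theta_i$ and let $j$ be the all-ones column vector of length $n$. The main angle of $\theta_i$ is $\beta_i=\frac{1}{\sqrt n}\sqrt{(E_ij)^*(E_ij)}$, where $^*$ denotes conjugate transpose. The eigenvalue $\theta_i$ is called main if $\beta_i\neq 0$. *)

theory Defs
  imports "Jordan_Normal_Form.Matrix" "Jordan_Normal_Form.Char_Poly"
begin

(* conjugate transpose A^* *)
definition ctrans :: "complex mat \<Rightarrow> complex mat" where
  "ctrans A = mat (dim_col A) (dim_row A) (\<lambda>(i,j). cnj (A $$ (j,i)))"

definition hermitian_mat :: "nat \<Rightarrow> complex mat \<Rightarrow> bool" where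
  "hermitian_mat n H \<longleftrightarrow> H \<in> carrier_mat n n \<and> ctrans H = H"

(* the all-ones column vector j and the all-ones matrix J *)
definition ones_vec :: "nat \<Rightarrow> complex vec" where
  "ones_vec n = vec n (\<lambda>_. 1)"

definition ones_mat :: "nat \<Rightarrow> complex mat" where
  "ones_mat n = mat n n (\<lambda>_. 1)"

(* eigenspace of H for theta *)
definition eigenspace :: "nat \<Rightarrow> complex mat \<Rightarrow> complex \<Rightarrow> complex vec set" where
  "eigenspace n H \<theta> = {v \<in> carrier_vec n. H *\<^sub>v v = \<theta> \<cdot>\<^sub>v v}"

(* orthogonal projection onto the eigenspace: the unique Hermitian idempotent
   n x n matrix whose range is the eigenspace *)
definition eig_proj :: "nat \<Rightarrow> complex mat \<Rightarrow> complex \<Rightarrow> complex mat" where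
  "eig_proj n H \<theta> = (THE P. P \<in> carrier_mat n n \<and> P * P = P \<and> ctrans P = P \<and>
       (*\<^sub>v) P ` carrier_vec n = eigenspace n H \<theta>)"

(* main angle beta = (1/sqrt n) sqrt((E j)^* (E j)) *)
definition main_angle :: "nat \<Rightarrow> complex mat \<Rightarrow> real \<Rightarrow> real" where
  "main_angle n H \<theta> =
     (let v = eig_proj n H (complex_of_real \<theta>) *\<^sub>v ones_vec n
      in (1 / sqrt (real n)) * sqrt (Re (\<Sum>i<n. cnj (v $ i) * v $ i)))"

(* the set of (real) main eigenvalues of the Hermitian matrix H *)
definition main_eigenvalues :: "nat \<Rightarrow> complex mat \<Rightarrow> real set" where
  "main_eigenvalues n H = {\<theta>. eigenvalue H (complex_of_real \<theta>) \<and> main_angle n H \<theta> \<noteq> 0}"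

end

theory Submission
  imports Defs "HOL-Computational_Algebra.Fundamental_Theorem_Algebra"
begin

(* ---- Spec1 ---- *)


definition ipn :: "nat \<Rightarrow> complex vec \<Rightarrow> complex vec \<Rightarrow> complex" where
  "ipn n u v = (\<Sum>i<n. u $ i * cnj (v $ i))"

lemma mat_vec_idx: "A \<in> carrier_mat n m \<Longrightarrow> v \<in> carrier_vec m \<Longrightarrow> i < n \<Longrightarrow>
   (A *\<^sub>v v) $ i = (\<Sum>j<m. A $$ (i,j) * v $ j)"
  by (auto simp: scalar_prod_def atLeast0LessThan intro!: sum.cong)

lemma herm_idx: "hermitian_mat n A \<Longrightarrow> i < n \<Longrightarrow> j < n \<Longrightarrow> A $$ (i,j) = cnj (A $$ (j,i))"
proof -
  assume h: "hermitian_mat n A" "i < n" "j < n"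
  hence c: "A \<in> carrier_mat n n" "ctrans A = A" by (auto simp: hermitian_mat_def)
  have "ctrans A $$ (i,j) = cnj (A $$ (j,i))" using c(1) h by (simp add: ctrans_def)
  thus ?thesis using c(2) by simp
qed

lemma ipn_adj:
  assumes A: "A \<in> carrier_mat n n" and u: "u \<in> carrier_vec n" and v: "v \<in> carrier_vec n"
  shows "ipn n (A *\<^sub>v u) v = ipn n u (ctrans A *\<^sub>v v)"
proof -
  have c: "ctrans A \<in> carrier_mat n n" using A by (auto simp: ctrans_def)
  have "ipn n (A *\<^sub>v u) v = (\<Sum>i<n. \<Sum>j<n. A $$ (i,j) * u $ j * cnj (v $ i))"
    unfolding ipn_def using A u by (simp add: mat_vec_idx[OF A u] sum_distrib_right del: index_mult_mat_vec)
  also have "\<dots> = (\<Sum>j<n. \<Sum>i<n. A $$ (i,j) * u $ j * cnj (v $ i))" by (rule sum.swap)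
  also have "\<dots> = ipn n u (ctrans A *\<^sub>v v)"
  proof -
    have e: "(ctrans A *\<^sub>v v) $ j = (\<Sum>i<n. cnj (A $$ (i,j)) * v $ i)" if j: "j < n" for j
      using mat_vec_idx[OF c v j] A j by (simp add: ctrans_def del: index_mult_mat_vec)
    show ?thesis unfolding ipn_def
      by (intro sum.cong refl, simp add: e sum_distrib_left mult_ac)
  qed
  finally show ?thesis .
qed

lemma ipn_herm:
  assumes h: "hermitian_mat n A" and u: "u \<in> carrier_vec n" and v: "v \<in> carrier_vec n"
  shows "ipn n (A *\<^sub>v u) v = ipn n u (A *\<^sub>v v)"
  using ipn_adj[of A n u v] h u v by (auto simp: hermitian_mat_def)

lemma ipn_add1: "u \<in> carrier_vec n \<Longrightarrow> w \<in> carrier_vec n \<Longrightarrow> ipn n (u + w) v = ipn n u v + ipn n w v"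
  by (auto simp: ipn_def distrib_right sum.distrib)
lemma ipn_add2: "u \<in> carrier_vec n \<Longrightarrow> w \<in> carrier_vec n \<Longrightarrow> ipn n v (u + w) = ipn n v u + ipn n v w"
  by (auto simp: ipn_def distrib_left sum.distrib)
lemma ipn_smult1: "u \<in> carrier_vec n \<Longrightarrow> ipn n (c \<cdot>\<^sub>v u) v = c * ipn n u v"
  by (auto simp: ipn_def sum_distrib_left mult.assoc)
lemma ipn_smult2: "u \<in> carrier_vec n \<Longrightarrow> ipn n v (c \<cdot>\<^sub>v u) = cnj c * ipn n v u"
  by (auto simp: ipn_def sum_distrib_left intro!: sum.cong)
lemma ipn_zero2: "ipn n v (0\<^sub>v n) = 0" by (auto simp: ipn_def)
lemma ipn_zero1: "ipn n (0\<^sub>v n) v = 0" by (auto simp: ipn_def)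
lemma ipn_cnj: "cnj (ipn n u v) = ipn n v u"
  by (auto simp: ipn_def mult.commute)
lemma ipn_unit: "i < n \<Longrightarrow> ipn n u (unit_vec n i) = u $ i"
  by (auto simp: ipn_def if_distrib cong: if_cong)

lemma ipn_self: "ipn n v v = of_real (\<Sum>i<n. (cmod (v $ i))^2)"
  unfolding ipn_def of_real_sum by (intro sum.cong refl) (metis complex_norm_square)

lemma ipn_self_Re: "Re (ipn n v v) = (\<Sum>i<n. (cmod (v $ i))^2)"
  by (simp add: ipn_self)

lemma ipn_self_zero: assumes v: "v \<in> carrier_vec n" and z: "ipn n v v = 0" shows "v = 0\<^sub>v n"
proof -
  have "of_real (\<Sum>i<n. (cmod (v $ i))^2) = (0::complex)" using z ipn_self[of n v] by simp
  hence "(\<Sum>i<n. (cmod (v $ i))^2) = 0" by (simp only: of_real_eq_0_iff)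
  hence "\<forall>i\<in>{..<n}. (cmod (v $ i))^2 = 0" by (subst (asm) sum_nonneg_eq_0_iff) auto
  thus ?thesis using v by (auto intro!: eq_vecI)
qed

lemma ctrans_mult: assumes A: "A \<in> carrier_mat n k" and B: "B \<in> carrier_mat k m"
  shows "ctrans (A * B) = ctrans B * ctrans A"
  using A B by (auto intro!: eq_matI simp: ctrans_def scalar_prod_def sum_conjugate[simplified]
     intro!: sum.cong simp: mult.commute)

lemma mat_eq_by_vec: fixes A B :: "complex mat" assumes A: "A \<in> carrier_mat n n" and B: "B \<in> carrier_mat n n"
  and e: "\<And>y. y \<in> carrier_vec n \<Longrightarrow> A *\<^sub>v y = B *\<^sub>v y"
shows "A = B"
proof (rule eq_matI)
  fix i j assume ij: "i < dim_row B" "j < dim_col B"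
  have "(A *\<^sub>v unit_vec n j) $ i = (B *\<^sub>v unit_vec n j) $ i" using e[of "unit_vec n j"] by simp
  thus "A $$ (i,j) = B $$ (i,j)" using ij A B
    by (simp add: mat_vec_idx if_distrib cong: if_cong)
qed (use A B in auto)


(* ---- Spec2 ---- *)


locale hm =
  fixes n :: nat and A :: "complex mat"
  assumes herm: "hermitian_mat n A"
begin

lemma A_carrier[simp]: "A \<in> carrier_mat n n" using herm by (simp add: hermitian_mat_def)
lemma A_dims[simp]: "dim_row A = n" "dim_col A = n" using carrier_matD[OF A_carrier] by auto

definition kv :: "nat \<Rightarrow> complex vec \<Rightarrow> complex vec" where
  "kv k y = (((*\<^sub>v) A) ^^ k) y"

lemma kv_0[simp]: "kv 0 y = y" by (simp add: kv_def)
lemma kv_Suc: "kv (Suc k) y = A *\<^sub>v kv k y" by (simp add: kv_def)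
lemma kv_carrier[simp]: "y \<in> carrier_vec n \<Longrightarrow> kv k y \<in> carrier_vec n"
  by (induct k) (auto simp: kv_Suc intro: mult_mat_vec_carrier[OF A_carrier])

definition mpv :: "complex poly \<Rightarrow> complex vec \<Rightarrow> complex vec" where
  "mpv p y = vec n (\<lambda>i. \<Sum>k\<le>degree p. coeff p k * kv k y $ i)"

lemma mpv_carrier[simp]: "mpv p y \<in> carrier_vec n" by (simp add: mpv_def)
lemma mpv_dim[simp]: "dim_vec (mpv p y) = n" by (simp add: mpv_def)

lemma mpv_idx: assumes "degree p < D" "i < n"
  shows "mpv p y $ i = (\<Sum>k<D. coeff p k * kv k y $ i)"
proof -
  have "mpv p y $ i = (\<Sum>k\<le>degree p. coeff p k * kv k y $ i)" using assms by (simp add: mpv_def)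
  also have "\<dots> = (\<Sum>k<D. coeff p k * kv k y $ i)"
    by (rule sum.mono_neutral_left) (use assms in \<open>auto simp: coeff_eq_0\<close>)
  finally show ?thesis .
qed

lemma mpv_add: "mpv (p + q) y = mpv p y + mpv q y"
proof (rule eq_vecI)
  fix i assume "i < dim_vec (mpv p y + mpv q y)"
  hence i: "i < n" by simp
  define D where "D = Suc (max (degree p) (degree q))"
  have d: "degree p < D" "degree q < D" "degree (p + q) < D"
    unfolding D_def using degree_add_le_max[of p q] by auto
  show "mpv (p + q) y $ i = (mpv p y + mpv q y) $ i"
    using i by (simp add: mpv_idx[OF d(1) i] mpv_idx[OF d(2) i] mpv_idx[OF d(3) i] 
      distrib_right sum.distrib)
qed simp

lemma mpv_smult: "mpv (Polynomial.smult c p) y = c \<cdot>\<^sub>v mpv p y"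
proof (rule eq_vecI)
  fix i assume "i < dim_vec (c \<cdot>\<^sub>v mpv p y)"
  hence i: "i < n" by simp
  have d: "degree p < Suc (degree p)" "degree (Polynomial.smult c p) < Suc (degree p)" by auto
  show "mpv (Polynomial.smult c p) y $ i = (c \<cdot>\<^sub>v mpv p y) $ i"
    using i by (simp add: mpv_idx[OF d(1) i] mpv_idx[OF d(2) i] sum_distrib_left mult.assoc ring_distribs)
qed simp

lemma mpv_const: "y \<in> carrier_vec n \<Longrightarrow> mpv [:c:] y = c \<cdot>\<^sub>v y"
  by (auto simp: mpv_def intro!: eq_vecI)

lemma mpv_zero: "mpv 0 y = 0\<^sub>v n"
  by (auto simp: mpv_def intro!: eq_vecI)

lemma kv_idx_Suc: "y \<in> carrier_vec n \<Longrightarrow> i < n \<Longrightarrow> kv (Suc k) y $ i = (\<Sum>j<n. A $$ (i,j) * kv k y $ j)"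
  by (simp add: kv_Suc mat_vec_idx[OF A_carrier, of "kv k y"] del: index_mult_mat_vec)

lemma mpv_shift: assumes y: "y \<in> carrier_vec n" shows "mpv (pCons 0 p) y = A *\<^sub>v mpv p y"
proof (rule eq_vecI)
  fix i assume "i < dim_vec (A *\<^sub>v mpv p y)"
  hence i: "i < n" by simp
  define D where "D = Suc (degree p)"
  have d: "degree p < D" "degree (pCons 0 p) < Suc D" unfolding D_def by (auto simp: degree_pCons_le)
  have "mpv (pCons 0 p) y $ i = (\<Sum>k<Suc D. coeff (pCons 0 p) k * kv k y $ i)"
    by (rule mpv_idx[OF d(2) i])
  also have "\<dots> = (\<Sum>k<D. coeff p k * kv (Suc k) y $ i)"
    by (subst sum.lessThan_Suc_shift) simp
  also have "\<dots> = (\<Sum>k<D. \<Sum>j<n. coeff p k * (A $$ (i,j) * kv k y $ j))"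
    using y i by (simp add: kv_idx_Suc sum_distrib_left)
  also have "\<dots> = (\<Sum>j<n. \<Sum>k<D. coeff p k * (A $$ (i,j) * kv k y $ j))" by (rule sum.swap)
  also have "\<dots> = (\<Sum>j<n. A $$ (i,j) * mpv p y $ j)"
    by (intro sum.cong refl) (simp add: mpv_idx[OF d(1)] sum_distrib_left mult_ac)
  also have "\<dots> = (A *\<^sub>v mpv p y) $ i"
    using i by (simp add: mat_vec_idx[OF A_carrier mpv_carrier i] del: index_mult_mat_vec)
  finally show "mpv (pCons 0 p) y $ i = (A *\<^sub>v mpv p y) $ i" .
qed simp

lemma mpv_pCons: assumes y: "y \<in> carrier_vec n"
  shows "mpv (pCons a p) y = a \<cdot>\<^sub>v y + A *\<^sub>v mpv p y"
proof -
  have "pCons a p = [:a:] + pCons 0 p" by simp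
  hence "mpv (pCons a p) y = mpv [:a:] y + mpv (pCons 0 p) y" by (metis mpv_add)
  thus ?thesis using y by (simp add: mpv_const mpv_shift)
qed

lemma mpv_mult: assumes y: "y \<in> carrier_vec n" shows "mpv (p * q) y = mpv p (mpv q y)"
proof (induct p)
  case 0
  then show ?case by (simp add: mpv_zero)
next
  case (pCons a p)
  have "mpv (pCons a p * q) y = mpv (Polynomial.smult a q + pCons 0 (p * q)) y" by simp
  also have "\<dots> = a \<cdot>\<^sub>v mpv q y + A *\<^sub>v mpv (p * q) y"
    using y by (simp add: mpv_add mpv_smult mpv_shift)
  also have "\<dots> = mpv (pCons a p) (mpv q y)"
    using pCons by (simp add: mpv_pCons)
  finally show ?case .
qed

lemma mpv_comm: assumes y: "y \<in> carrier_vec n" shows "mpv p (mpv q y) = mpv q (mpv p y)"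
  using y by (metis mpv_mult mult.commute)

lemma mpv_one: "y \<in> carrier_vec n \<Longrightarrow> mpv 1 y = y"
  by (metis mpv_const one_pCons smult_carrier_vec one_smult_vec)

lemma mpv_x: assumes y: "y \<in> carrier_vec n" shows "mpv [:0,1:] y = A *\<^sub>v y"
  using y by (simp add: mpv_shift mpv_const)

lemma mpv_eig: assumes v: "v \<in> carrier_vec n" and e: "A *\<^sub>v v = z \<cdot>\<^sub>v v"
  shows "mpv p v = poly p z \<cdot>\<^sub>v v"
proof (induct p)
  case 0 thus ?case using v by (auto simp: mpv_zero intro!: eq_vecI)
next
  case (pCons a p)
  have "mpv (pCons a p) v = a \<cdot>\<^sub>v v + A *\<^sub>v (poly p z \<cdot>\<^sub>v v)" using v pCons by (simp add: mpv_pCons)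
  also have "A *\<^sub>v (poly p z \<cdot>\<^sub>v v) = poly p z \<cdot>\<^sub>v (z \<cdot>\<^sub>v v)"
    using v e by (simp add: mult_mat_vec[OF A_carrier v])
  finally show ?case using v by (auto intro!: eq_vecI simp: algebra_simps)
qed

lemma mpv_sum: assumes "finite F" "i < n"
  shows "mpv (\<Sum>x\<in>F. f x) y $ i = (\<Sum>x\<in>F. mpv (f x) y $ i)"
  using assms by (induct F rule: finite_induct) (auto simp: mpv_zero mpv_add)

definition rc :: "complex poly \<Rightarrow> bool" where "rc p \<longleftrightarrow> (\<forall>k. coeff p k \<in> \<real>)"

lemma rc_pCons: "rc (pCons a p) \<longleftrightarrow> a \<in> \<real> \<and> rc p"
  unfolding rc_def by (auto simp: coeff_pCons split: nat.splits)

lemma Av_carrier[simp]: "v \<in> carrier_vec n \<Longrightarrow> A *\<^sub>v v \<in> carrier_vec n"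
  by (rule mult_mat_vec_carrier[OF A_carrier])

lemma ipn_mpv: assumes "rc p" and "u \<in> carrier_vec n" and "v \<in> carrier_vec n"
  shows "ipn n (mpv p u) v = ipn n u (mpv p v)"
  using assms
proof (induct p arbitrary: v)
  case 0 thus ?case by (simp add: mpv_zero ipn_zero1 ipn_zero2)
next
  case (pCons a p v)
  have a: "a \<in> \<real>" and p: "rc p" and u: "u \<in> carrier_vec n" and v: "v \<in> carrier_vec n"
    using pCons.prems by (auto simp: rc_pCons)
  have Av: "A *\<^sub>v v \<in> carrier_vec n" using v by simp
  have c: "mpv p (A *\<^sub>v v) = A *\<^sub>v mpv p v"
    using mpv_x[OF v] mpv_comm[OF v, of p "[:0,1:]"] mpv_x[OF mpv_carrier, of p v] by simp
  have ca: "cnj a = a" using a by (simp add: Reals_cnj_iff)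
  have "ipn n (mpv (pCons a p) u) v = a * ipn n u v + ipn n (mpv p u) (A *\<^sub>v v)"
    using u v by (simp add: mpv_pCons ipn_add1 ipn_smult1 ipn_herm[OF herm])
  also have "ipn n (mpv p u) (A *\<^sub>v v) = ipn n u (A *\<^sub>v mpv p v)"
    using pCons.hyps(2)[OF p u Av] c by simp
  also have "a * ipn n u v + ipn n u (A *\<^sub>v mpv p v) = ipn n u (mpv (pCons a p) v)"
    using u v ca by (simp add: mpv_pCons ipn_add2 ipn_smult2)
  finally show ?case .
qed

end

(* ---- Spec3 ---- *)


context hm begin

lemma rc_mult: "rc p \<Longrightarrow> rc q \<Longrightarrow> rc (p * q)"
  unfolding rc_def coeff_mult by (auto intro!: sum_in_Reals Reals_mult)
lemma rc_add: "rc p \<Longrightarrow> rc q \<Longrightarrow> rc (p + q)"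
  unfolding rc_def by auto
lemma rc_smult: "c \<in> \<real> \<Longrightarrow> rc q \<Longrightarrow> rc (Polynomial.smult c q)"
  unfolding rc_def by auto
lemma rc_one: "rc 1" unfolding rc_def by (auto simp: coeff_1)
lemma rc_prod: "(\<And>x. x \<in> F \<Longrightarrow> rc (f x)) \<Longrightarrow> rc (\<Prod>x\<in>F. f x)"
  by (induct F rule: infinite_finite_induct) (auto simp: rc_one rc_mult)
lemma rc_sum: "(\<And>x. x \<in> F \<Longrightarrow> rc (f x)) \<Longrightarrow> rc (\<Sum>x\<in>F. f x)"
  by (induct F rule: infinite_finite_induct) (auto simp: rc_add, auto simp: rc_def)
lemma rc_lin: "rc [:of_real t, 1:]" unfolding rc_def by (auto simp: coeff_pCons split: nat.splits)

lemma ipn_A_vec: "v \<in> carrier_vec n \<Longrightarrow> ipn n (z \<cdot>\<^sub>v v) v = z * ipn n v v"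
  by (rule ipn_smult1)

lemma eig_real: assumes "eigenvalue A z" shows "z \<in> \<real>"
proof -
  obtain v where v: "v \<in> carrier_vec n" "v \<noteq> 0\<^sub>v n" "A *\<^sub>v v = z \<cdot>\<^sub>v v"
    using assms unfolding eigenvalue_def eigenvector_def by auto
  have "ipn n (A *\<^sub>v v) v = ipn n v (A *\<^sub>v v)" by (rule ipn_herm[OF herm v(1) v(1)])
  hence "z * ipn n v v = cnj z * ipn n v v" using v by (simp add: ipn_smult1 ipn_smult2)
  moreover have "ipn n v v \<noteq> 0" using ipn_self_zero[OF v(1)] v(2) by auto
  ultimately have "cnj z = z" by simp
  thus ?thesis by (simp add: Reals_cnj_iff)
qed

definition S :: "real set" where "S = {\<theta>. eigenvalue A (of_real \<theta>)}"

lemma S_finite: "finite S"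
proof -
  have nz: "char_poly A \<noteq> 0" using degree_monic_char_poly[OF A_carrier] by auto
  have "S \<subseteq> of_real -` {z. poly (char_poly A) z = 0}"
    unfolding S_def using eigenvalue_root_char_poly[OF A_carrier] by auto
  moreover have "finite (of_real -` {z. poly (char_poly A) z = (0::complex)} :: real set)"
    by (rule finite_vimageI[OF poly_roots_finite[OF nz]]) (auto simp: inj_on_def)
  ultimately show ?thesis by (rule finite_subset)
qed

definition mC :: "complex poly" where "mC = (\<Prod>\<theta>\<in>S. [:- of_real \<theta>, 1:])"

lemma rc_mC: "rc mC" unfolding mC_def
  using rc_lin[of "-_"] by (intro rc_prod) simp

lemma poly_mC: "\<theta> \<in> S \<Longrightarrow> poly mC (of_real \<theta>) = 0"
  unfolding mC_def poly_prod using S_finite by (auto intro: prod_zero)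

lemma krylov_dep: assumes u: "u \<in> carrier_vec n" shows "\<exists>p. p \<noteq> 0 \<and> mpv p u = 0\<^sub>v n"
proof -
  define c where "c = (\<lambda>i. vec (Suc n) (\<lambda>k. kv k u $ i))"
  define C where "C = mat\<^sub>r (Suc n) (Suc n) (\<lambda>i. if i = n then 0\<^sub>v (Suc n) else c i)"
  have C: "C \<in> carrier_mat (Suc n) (Suc n)" unfolding C_def by auto
  have "det C = 0" unfolding C_def by (rule det_row_0) (auto simp: c_def)
  then obtain x where x: "x \<in> carrier_vec (Suc n)" "x \<noteq> 0\<^sub>v (Suc n)" "C *\<^sub>v x = 0\<^sub>v (Suc n)"
    using det_0_iff_vec_prod_zero[OF C] by auto
  define p where "p = (\<Sum>k<Suc n. monom (x $ k) k)"
  have cp: "coeff p j = (if j < Suc n then x $ j else 0)" for j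
    unfolding p_def coeff_sum coeff_monom by (auto simp: sum.delta)
  have "p \<noteq> 0"
  proof
    assume "p = 0"
    hence "\<forall>j<Suc n. x $ j = 0" using cp by (metis coeff_0)
    thus False using x by (auto intro!: eq_vecI)
  qed
  moreover have "mpv p u = 0\<^sub>v n"
  proof (rule eq_vecI)
    fix i assume "i < dim_vec (0\<^sub>v n :: complex vec)" hence i: "i < n" by simp
    have d: "degree p < Suc n" using cp by (intro le_imp_less_Suc degree_le) auto
    have "(C *\<^sub>v x) $ i = 0" using x(3) i by simp
    hence "(\<Sum>k<Suc n. C $$ (i,k) * x $ k) = 0" using mat_vec_idx[OF C x(1), of i] i by simp
    hence "(\<Sum>k<Suc n. kv k u $ i * x $ k) = 0" using i
      by (simp add: C_def c_def)
    thus "mpv p u $ i = 0\<^sub>v n $ i" using i by (simp add: mpv_idx[OF d i] cp mult.commute)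
  qed simp
  ultimately show ?thesis by blast
qed

lemma smult_vec_zero_cancel: assumes c: "(c::complex) \<noteq> 0" and x: "x \<in> carrier_vec n"
  and e: "c \<cdot>\<^sub>v x = 0\<^sub>v n" shows "x = 0\<^sub>v n"
proof (rule eq_vecI)
  fix i assume "i < dim_vec (0\<^sub>v n :: complex vec)" hence i: "i < n" by simp
  have "(c \<cdot>\<^sub>v x) $ i = 0" using e i by simp
  thus "x $ i = 0\<^sub>v n $ i" using c x i by simp
qed (use x in simp)

lemma kill: "p \<noteq> 0 \<Longrightarrow> w \<in> carrier_vec n \<Longrightarrow> mpv p (mpv mC w) = 0\<^sub>v n \<Longrightarrow> mpv mC w = 0\<^sub>v n"
proof (induct "degree p" arbitrary: p w rule: less_induct)
  case less
  note p0 = less.prems(1) and w = less.prems(2) and k = less.prems(3)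
  show ?case
  proof (cases "degree p = 0")
    case True
    hence pp: "p = [:coeff p 0:]" using degree_0_id by metis
    hence c0: "coeff p 0 \<noteq> 0" using p0 by (metis pCons_0_0)
    have "coeff p 0 \<cdot>\<^sub>v mpv mC w = 0\<^sub>v n" using k pp mpv_const[OF mpv_carrier] by metis
    thus ?thesis using c0 smult_vec_zero_cancel[OF _ mpv_carrier] by blast
  next
    case False
    hence "\<not> constant (poly p)" by (simp add: constant_degree)
    then obtain z where "poly p z = 0" using fundamental_theorem_of_algebra by blast
    then obtain q where pq: "p = [:-z,1:] * q" by (auto simp: poly_eq_0_iff_dvd dvd_def)
    have q0: "q \<noteq> 0" using p0 pq by auto
    have "degree ([:-z,1:] * q) = degree [:-z,1:] + degree q"
      by (rule degree_mult_eq) (use q0 in auto)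
    hence dq: "degree q < degree p" using pq by simp
    define x where "x = mpv mC w"
    define v where "v = mpv q x"
    have v: "v \<in> carrier_vec n" by (simp add: v_def)
    have "mpv [:-z,1:] v = 0\<^sub>v n" using k unfolding pq v_def x_def
      by (subst (asm) mpv_mult[OF mpv_carrier]) simp
    moreover have "mpv [:-z,1:] v = (- z) \<cdot>\<^sub>v v + A *\<^sub>v mpv [:1:] v" by (rule mpv_pCons[OF v])
    moreover have "mpv [:1:] v = v" using mpv_const[OF v, of 1] v by simp
    ultimately have "(- z) \<cdot>\<^sub>v v + A *\<^sub>v v = 0\<^sub>v n" by simp
    hence Av: "A *\<^sub>v v = z \<cdot>\<^sub>v v"
    proof (intro eq_vecI)
      fix i assume e: "(- z) \<cdot>\<^sub>v v + A *\<^sub>v v = 0\<^sub>v n" and "i < dim_vec (z \<cdot>\<^sub>v v)"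
      hence i: "i < n" using v by simp
      have "((- z) \<cdot>\<^sub>v v + A *\<^sub>v v) $ i = 0" using e i by simp
      thus "(A *\<^sub>v v) $ i = (z \<cdot>\<^sub>v v) $ i" using i v by (simp add: algebra_simps)
    qed (use v in simp)
    show ?thesis
    proof (cases "v = 0\<^sub>v n")
      case True
      thus ?thesis using less.hyps[OF dq q0 w] by (simp add: v_def x_def)
    next
      case False
      hence "eigenvalue A z" using v Av unfolding eigenvalue_def eigenvector_def by auto
      hence zr: "z \<in> \<real>" by (rule eig_real)
      then obtain t where t: "z = of_real t" by (auto elim: Reals_cases)
      hence tS: "t \<in> S" using \<open>eigenvalue A z\<close> by (simp add: S_def)
      have vm: "v = mpv mC (mpv q w)" using w by (simp add: v_def x_def mpv_comm)
      have "mpv mC v = 0\<^sub>v n" using mpv_eig[OF v Av] poly_mC[OF tS] t v by auto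
      hence "ipn n v v = 0" using vm ipn_mpv[OF rc_mC mpv_carrier[of q w] v]
        by (simp add: ipn_zero2)
      hence "v = 0\<^sub>v n" by (rule ipn_self_zero[OF v])
      with False show ?thesis by simp
    qed
  qed
qed

lemma N_zero: "w \<in> carrier_vec n \<Longrightarrow> mpv mC w = 0\<^sub>v n"
  using krylov_dep[OF mpv_carrier, of mC w] kill by blast

end

(* ---- Spec4 ---- *)


lemma proj_unique:
  fixes P Q :: "complex mat"
  assumes P: "P \<in> carrier_mat n n" "P * P = P" "ctrans P = P"
  and Q: "Q \<in> carrier_mat n n" "Q * Q = Q" "ctrans Q = Q"
  and r: "(*\<^sub>v) P ` carrier_vec n = (*\<^sub>v) Q ` carrier_vec n"
shows "P = Q"
proof -
  have fix1: "X *\<^sub>v (Y *\<^sub>v y) = Y *\<^sub>v y"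
    if X: "X \<in> carrier_mat n n" "X * X = X" and Y: "Y \<in> carrier_mat n n"
    and rr: "(*\<^sub>v) Y ` carrier_vec n = (*\<^sub>v) X ` carrier_vec n" and y: "y \<in> carrier_vec n" for X Y y
  proof -
    obtain x where x: "x \<in> carrier_vec n" "Y *\<^sub>v y = X *\<^sub>v x" using rr y by blast
    have "X *\<^sub>v (X *\<^sub>v x) = (X * X) *\<^sub>v x" using assoc_mult_mat_vec[OF X(1) X(1) x(1)] by simp
    thus ?thesis using x X by simp
  qed
  have QP: "Q * P = P"
    by (rule mat_eq_by_vec[of _ n]) (use P Q r fix1[of Q P] in \<open>auto simp: assoc_mult_mat_vec\<close>)
  have PQ: "P * Q = Q"
    by (rule mat_eq_by_vec[of _ n]) (use P Q r fix1[of P Q] in \<open>auto simp: assoc_mult_mat_vec\<close>)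
  have "ctrans (Q * P) = ctrans P * ctrans Q" using P Q by (simp add: ctrans_mult)
  thus ?thesis using P Q QP PQ by simp
qed

context hm begin

definition Em :: "complex poly \<Rightarrow> complex mat" where
  "Em p = mat n n (\<lambda>(i,j). mpv p (unit_vec n j) $ i)"

lemma Em_carrier[simp]: "Em p \<in> carrier_mat n n" by (simp add: Em_def)

lemma kv_lin: assumes y: "y \<in> carrier_vec n" and i: "i < n"
  shows "kv k y $ i = (\<Sum>j<n. kv k (unit_vec n j) $ i * y $ j)"
  using i
proof (induct k arbitrary: i)
  case 0
  have "(\<Sum>j<n. unit_vec n j $ i * y $ j) = (\<Sum>j<n. if j = i then y $ j else 0)"
    by (intro sum.cong refl) (use 0 in auto)
  thus ?case using 0 by simp
next
  case (Suc k i)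
  have "kv (Suc k) y $ i = (\<Sum>l<n. A $$ (i,l) * kv k y $ l)" by (rule kv_idx_Suc[OF y Suc(2)])
  also have "\<dots> = (\<Sum>l<n. \<Sum>j<n. A $$ (i,l) * (kv k (unit_vec n j) $ l * y $ j))"
    by (intro sum.cong refl) (simp add: Suc(1) sum_distrib_left)
  also have "\<dots> = (\<Sum>j<n. \<Sum>l<n. A $$ (i,l) * (kv k (unit_vec n j) $ l * y $ j))" by (rule sum.swap)
  also have "\<dots> = (\<Sum>j<n. kv (Suc k) (unit_vec n j) $ i * y $ j)"
    by (intro sum.cong refl) (simp add: kv_idx_Suc[OF _ Suc(2)] sum_distrib_right sum_distrib_left mult_ac)
  finally show ?case .
qed

lemma Em_vec: assumes y: "y \<in> carrier_vec n" shows "Em p *\<^sub>v y = mpv p y"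
proof (rule eq_vecI)
  fix i assume "i < dim_vec (mpv p y)" hence i: "i < n" by simp
  have d: "degree p < Suc (degree p)" by simp
  have "(Em p *\<^sub>v y) $ i = (\<Sum>j<n. mpv p (unit_vec n j) $ i * y $ j)"
    by (subst mat_vec_idx[OF Em_carrier y i]) (auto simp: Em_def i intro!: sum.cong)
  also have "\<dots> = (\<Sum>j<n. \<Sum>k<Suc (degree p). coeff p k * kv k (unit_vec n j) $ i * y $ j)"
    by (intro sum.cong refl) (simp add: mpv_idx[OF d i] sum_distrib_right del: sum.lessThan_Suc)
  also have "\<dots> = (\<Sum>k<Suc (degree p). \<Sum>j<n. coeff p k * kv k (unit_vec n j) $ i * y $ j)"
    by (rule sum.swap)
  also have "\<dots> = mpv p y $ i"
    by (simp add: mpv_idx[OF d i] kv_lin[OF y i] sum_distrib_left mult_ac)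
  finally show "(Em p *\<^sub>v y) $ i = mpv p y $ i" .
qed (simp add: Em_def)

lemma Em_herm: assumes "rc p" shows "ctrans (Em p) = Em p"
proof (rule eq_matI)
  fix i j assume "i < dim_row (Em p)" "j < dim_col (Em p)"
  hence ij: "i < n" "j < n" by (simp_all add: Em_def)
  have "ctrans (Em p) $$ (i,j) = cnj (mpv p (unit_vec n i) $ j)"
    using ij by (simp add: ctrans_def Em_def)
  also have "\<dots> = cnj (ipn n (mpv p (unit_vec n i)) (unit_vec n j))" using ij by (simp add: ipn_unit)
  also have "\<dots> = ipn n (unit_vec n j) (mpv p (unit_vec n i))" by (rule ipn_cnj)
  also have "\<dots> = ipn n (mpv p (unit_vec n j)) (unit_vec n i)"
    using ipn_mpv[OF assms, of "unit_vec n j" "unit_vec n i"] by simp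
  also have "\<dots> = Em p $$ (i,j)" using ij by (simp add: ipn_unit Em_def)
  finally show "ctrans (Em p) $$ (i,j) = Em p $$ (i,j)" .
qed (auto simp: ctrans_def Em_def)

definition lag :: "real \<Rightarrow> complex poly" where
  "lag \<theta> = Polynomial.smult (of_real (1 / (\<Prod>t\<in>S-{\<theta>}. (\<theta> - t))))
            (\<Prod>t\<in>S-{\<theta>}. [:- of_real t, 1:])"

lemma rc_lag: "rc (lag \<theta>)"
  unfolding lag_def using rc_lin[of "-_"] by (intro rc_smult rc_prod) auto

lemma poly_lag: assumes "\<theta> \<in> S" "t \<in> S"
  shows "poly (lag \<theta>) (of_real t) = (if t = \<theta> then 1 else 0)"
proof (cases "t = \<theta>")
  case True
  have "(\<Prod>t\<in>S-{\<theta>}. (of_real \<theta> - of_real t :: complex)) \<noteq> 0"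
    using S_finite by (simp add: prod_zero_iff)
  thus ?thesis using True by (simp add: lag_def poly_prod)
next
  case False
  thus ?thesis using assms S_finite by (simp add: lag_def poly_prod prod_zero_iff)
qed

lemma lag_mult: assumes "\<theta> \<in> S"
  shows "[:- of_real \<theta>, 1:] * lag \<theta> = Polynomial.smult (of_real (1 / (\<Prod>t\<in>S-{\<theta>}. (\<theta> - t)))) mC"
  unfolding lag_def mC_def prod.remove[OF S_finite assms] by (simp only: mult_smult_right)

lemma degree_lag: assumes "\<theta> \<in> S" shows "degree (lag \<theta>) \<le> card S - 1"
proof -
  have "degree (\<Prod>t\<in>S-{\<theta>}. [:- (of_real t :: complex), 1:]) \<le> (\<Sum>t\<in>S-{\<theta>}. 1)"
    using degree_prod_sum_le[of "S-{\<theta>}" "\<lambda>t. [:- (of_real t :: complex), 1:]"] S_finite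
    by (simp add: o_def)
  also have "\<dots> \<le> card S - 1" using S_finite assms by (simp add: card_Diff_singleton_if)
  finally show ?thesis unfolding lag_def by (meson degree_smult_le order_trans)
qed

lemma sum_lag: assumes "S \<noteq> {}" shows "(\<Sum>\<theta>\<in>S. lag \<theta>) = 1"
proof (rule poly_eqI_degree[of "of_real ` S"])
  have cS: "card (of_real ` S :: complex set) = card S" by (rule card_image) (auto simp: inj_on_def)
  have cp: "card S > 0" using assms S_finite by auto
  show "poly (\<Sum>\<theta>\<in>S. lag \<theta>) x = poly 1 x" if x: "x \<in> of_real ` S" for x
  proof -
    obtain t where t: "t \<in> S" "x = of_real t" using x by blast
    have "poly (\<Sum>\<theta>\<in>S. lag \<theta>) x = (\<Sum>\<theta>\<in>S. if t = \<theta> then 1 else 0)"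
      unfolding poly_sum t(2) by (intro sum.cong refl) (simp add: poly_lag t(1))
    thus ?thesis using t S_finite by simp
  qed
  have "degree (\<Sum>\<theta>\<in>S. lag \<theta>) \<le> card S - 1"
    by (rule degree_le) (auto simp: coeff_sum coeff_eq_0 intro!: sum.neutral
      dest: le_less_trans[OF degree_lag[OF _]])
  thus "degree (\<Sum>\<theta>\<in>S. lag \<theta>) < card (of_real ` S :: complex set)" using cS cp by linarith
  show "degree (1::complex poly) < card (of_real ` S :: complex set)" using cS cp by simp
qed

lemma S_nonempty: assumes "n > 0" shows "S \<noteq> {}"
proof
  assume "S = {}"
  hence "mC = 1" by (simp add: mC_def)
  moreover have "mpv mC (unit_vec n 0) = 0\<^sub>v n" by (rule N_zero) simp
  moreover have "mpv 1 (unit_vec n 0) = unit_vec n 0" by (rule mpv_one) simp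
  ultimately have "unit_vec n 0 = (0\<^sub>v n :: complex vec)" by metis
  hence "unit_vec n 0 $ 0 = (0\<^sub>v n :: complex vec) $ 0" by simp
  thus False using assms by simp
qed

lemma lag_eig: assumes th: "\<theta> \<in> S" and y: "y \<in> carrier_vec n"
  shows "A *\<^sub>v mpv (lag \<theta>) y = of_real \<theta> \<cdot>\<^sub>v mpv (lag \<theta>) y"
proof -
  define c where "c = (of_real (1 / (\<Prod>t\<in>S-{\<theta>}. (\<theta> - t))) :: complex)"
  have "mpv ([:- of_real \<theta>, 1:] * lag \<theta>) y = c \<cdot>\<^sub>v mpv mC y"
    unfolding lag_mult[OF th] c_def by (rule mpv_smult)
  also have "\<dots> = 0\<^sub>v n" using N_zero[OF y] by (auto intro!: eq_vecI)
  finally have z: "mpv [:- of_real \<theta>, 1:] (mpv (lag \<theta>) y) = 0\<^sub>v n"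
    using mpv_mult[OF y, of "[:- of_real \<theta>, 1:]" "lag \<theta>"] by simp
  define x where "x = mpv (lag \<theta>) y"
  have x: "x \<in> carrier_vec n" by (simp add: x_def)
  have "mpv [:- of_real \<theta>, 1:] x = (- of_real \<theta>) \<cdot>\<^sub>v x + A *\<^sub>v mpv [:1:] x" by (rule mpv_pCons[OF x])
  moreover have "mpv [:1:] x = x" using mpv_const[OF x, of 1] x by simp
  ultimately have e: "(- of_real \<theta>) \<cdot>\<^sub>v x + A *\<^sub>v x = 0\<^sub>v n" using z by (simp add: x_def)
  show ?thesis unfolding x_def[symmetric]
  proof (rule eq_vecI)
    fix i assume "i < dim_vec (complex_of_real \<theta> \<cdot>\<^sub>v x)"
    hence i: "i < n" using x by simp
    have "((- of_real \<theta>) \<cdot>\<^sub>v x + A *\<^sub>v x) $ i = 0" using e i by simp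
    thus "(A *\<^sub>v x) $ i = (of_real \<theta> \<cdot>\<^sub>v x) $ i" using i x by (simp add: algebra_simps)
  qed (use x in simp)
qed

lemma spectral_proj: assumes th: "\<theta> \<in> S"
  shows "eig_proj n A (of_real \<theta>) = Em (lag \<theta>)"
proof -
  let ?P = "Em (lag \<theta>)"
  have rng1: "?P *\<^sub>v y \<in> eigenspace n A (of_real \<theta>)" if y: "y \<in> carrier_vec n" for y
    using lag_eig[OF th y] y by (simp add: Em_vec eigenspace_def)
  have fix1: "?P *\<^sub>v v = v" if v: "v \<in> eigenspace n A (of_real \<theta>)" for v
  proof -
    have v': "v \<in> carrier_vec n" "A *\<^sub>v v = of_real \<theta> \<cdot>\<^sub>v v" using v by (auto simp: eigenspace_def)
    show ?thesis using mpv_eig[OF v', of "lag \<theta>"] poly_lag[OF th th] Em_vec[OF v'(1)] v'(1) by simp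
  qed
  have rng: "(*\<^sub>v) ?P ` carrier_vec n = eigenspace n A (of_real \<theta>)"
  proof
    show "(*\<^sub>v) ?P ` carrier_vec n \<subseteq> eigenspace n A (of_real \<theta>)" using rng1 by auto
    show "eigenspace n A (of_real \<theta>) \<subseteq> (*\<^sub>v) ?P ` carrier_vec n"
    proof
      fix v assume v: "v \<in> eigenspace n A (of_real \<theta>)"
      hence "v \<in> carrier_vec n" by (simp add: eigenspace_def)
      thus "v \<in> (*\<^sub>v) ?P ` carrier_vec n" using fix1[OF v] by (metis image_eqI)
    qed
  qed
  have idem: "?P * ?P = ?P"
  proof (rule mat_eq_by_vec[of _ n])
    show "?P * ?P \<in> carrier_mat n n" by (rule mult_carrier_mat[OF Em_carrier Em_carrier])
    fix y :: "complex vec" assume y: "y \<in> carrier_vec n"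
    show "?P * ?P *\<^sub>v y = ?P *\<^sub>v y"
      using assoc_mult_mat_vec[OF Em_carrier Em_carrier y] fix1[OF rng1[OF y]] by simp
  qed simp
  have hm: "ctrans ?P = ?P" by (rule Em_herm[OF rc_lag])
  show ?thesis unfolding eig_proj_def
  proof (rule the_equality)
    show "?P \<in> carrier_mat n n \<and> ?P * ?P = ?P \<and> ctrans ?P = ?P \<and>
      (*\<^sub>v) ?P ` carrier_vec n = eigenspace n A (of_real \<theta>)" using idem hm rng by simp
    fix Q assume "Q \<in> carrier_mat n n \<and> Q * Q = Q \<and> ctrans Q = Q \<and>
      (*\<^sub>v) Q ` carrier_vec n = eigenspace n A (of_real \<theta>)"
    thus "Q = ?P" using proj_unique[of Q n ?P] idem hm rng by auto
  qed
qed

lemma completeness: assumes y: "y \<in> carrier_vec n" and i: "i < n"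
  shows "(\<Sum>\<theta>\<in>S. (eig_proj n A (of_real \<theta>) *\<^sub>v y) $ i) = y $ i"
proof -
  have "(\<Sum>\<theta>\<in>S. (eig_proj n A (of_real \<theta>) *\<^sub>v y) $ i) = (\<Sum>\<theta>\<in>S. mpv (lag \<theta>) y $ i)"
    by (intro sum.cong refl) (simp add: spectral_proj Em_vec[OF y])
  also have "\<dots> = mpv (\<Sum>\<theta>\<in>S. lag \<theta>) y $ i" by (rule mpv_sum[OF S_finite i, symmetric])
  also have "\<dots> = y $ i" using sum_lag[OF S_nonempty] i y by (simp add: mpv_one)
  finally show ?thesis .
qed

end

(* ---- Spec5 ---- *)


lemma ma_formula:
  fixes v :: "complex vec"
  assumes "v = eig_proj n A (of_real \<theta>) *\<^sub>v ones_vec n"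
  shows "main_angle n A \<theta> = (1 / sqrt (real n)) * sqrt (Re (ipn n v v))"
  unfolding main_angle_def Let_def assms[symmetric] ipn_def by (simp add: mult.commute)

lemma ma_props:
  fixes v :: "complex vec"
  assumes v: "v = eig_proj n A (of_real \<theta>) *\<^sub>v ones_vec n" and vc: "v \<in> carrier_vec n" and n: "n > 0"
  shows "real n * (main_angle n A \<theta>)^2 = Re (ipn n v v)"
    "main_angle n A \<theta> \<noteq> 0 \<longleftrightarrow> v \<noteq> 0\<^sub>v n"
proof -
  have nn: "Re (ipn n v v) \<ge> 0" by (simp add: ipn_self_Re sum_nonneg)
  show "real n * (main_angle n A \<theta>)^2 = Re (ipn n v v)"
    unfolding ma_formula[OF v] using n nn by (simp add: power_mult_distrib real_sqrt_pow2 power_divide)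
  have "main_angle n A \<theta> \<noteq> 0 \<longleftrightarrow> Re (ipn n v v) \<noteq> 0"
    unfolding ma_formula[OF v] using n nn by simp
  also have "\<dots> \<longleftrightarrow> ipn n v v \<noteq> 0" by (simp only: ipn_self Re_complex_of_real of_real_eq_0_iff)
  also have "\<dots> \<longleftrightarrow> v \<noteq> 0\<^sub>v n" using ipn_self_zero[OF vc] by (auto simp: ipn_zero1)
  finally show "main_angle n A \<theta> \<noteq> 0 \<longleftrightarrow> v \<noteq> 0\<^sub>v n" .
qed

lemma ma_zero_n: "main_angle 0 A \<theta> = 0"
  by (simp add: main_angle_def Let_def)

context hm begin

lemma S_iff: "\<theta> \<in> S \<longleftrightarrow> eigenvalue A (of_real \<theta>)" by (simp add: S_def)

lemma P_carrier: "\<theta> \<in> S \<Longrightarrow> eig_proj n A (of_real \<theta>) \<in> carrier_mat n n"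
  by (simp add: spectral_proj)

lemma P_vec_carrier[simp]: "\<theta> \<in> S \<Longrightarrow> y \<in> carrier_vec n \<Longrightarrow> eig_proj n A (of_real \<theta>) *\<^sub>v y \<in> carrier_vec n"
  by (simp add: spectral_proj Em_vec)

lemma P_ip: assumes "\<theta> \<in> S" "u \<in> carrier_vec n" "v \<in> carrier_vec n"
  shows "ipn n (eig_proj n A (of_real \<theta>) *\<^sub>v u) v = ipn n u (eig_proj n A (of_real \<theta>) *\<^sub>v v)"
  using assms by (simp add: spectral_proj Em_vec ipn_mpv rc_lag)

lemma P_eig: assumes "\<theta> \<in> S" "y \<in> carrier_vec n"
  shows "A *\<^sub>v (eig_proj n A (of_real \<theta>) *\<^sub>v y) = of_real \<theta> \<cdot>\<^sub>v (eig_proj n A (of_real \<theta>) *\<^sub>v y)"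
  using assms by (simp add: spectral_proj Em_vec lag_eig)

lemma P_fix: assumes "\<theta> \<in> S" "v \<in> carrier_vec n" "A *\<^sub>v v = of_real \<theta> \<cdot>\<^sub>v v"
  shows "eig_proj n A (of_real \<theta>) *\<^sub>v v = v"
  using assms mpv_eig[OF assms(2,3), of "lag \<theta>"] poly_lag[OF assms(1) assms(1)]
  by (simp add: spectral_proj Em_vec)

lemma P_idem: assumes "\<theta> \<in> S" "y \<in> carrier_vec n"
  shows "eig_proj n A (of_real \<theta>) *\<^sub>v (eig_proj n A (of_real \<theta>) *\<^sub>v y) = eig_proj n A (of_real \<theta>) *\<^sub>v y"
  by (rule P_fix[OF assms(1) _ P_eig[OF assms]]) (use assms in simp)

end

(* ---- Real1 ---- *)


lemma sign_prod:
  fixes t :: "nat \<Rightarrow> real"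
  assumes mono: "\<And>i j. i < j \<Longrightarrow> j < r \<Longrightarrow> t i < t j" and k: "k < r"
  shows "(-1)^(r-1-k) * (\<Prod>i\<in>{..<r}-{k}. t k - t i) > 0"
proof -
  have set: "{..<r}-{k} = {..<k} \<union> {Suc k..<r}" using k by auto
  have P1: "(\<Prod>i<k. t k - t i) > 0" by (rule prod_pos) (use mono k in auto)
  have P2: "(\<Prod>i\<in>{Suc k..<r}. t i - t k) > 0" by (rule prod_pos) (use mono in auto)
  have "(\<Prod>i\<in>{Suc k..<r}. t k - t i) = (\<Prod>i\<in>{Suc k..<r}. - (t i - t k))" by simp
  also have "\<dots> = (-1)^(r-1-k) * (\<Prod>i\<in>{Suc k..<r}. t i - t k)"
    by (subst prod_uminus) simp
  finally have e: "(\<Prod>i\<in>{Suc k..<r}. t k - t i) = (-1)^(r-1-k) * (\<Prod>i\<in>{Suc k..<r}. t i - t k)" .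
  have "(\<Prod>i\<in>{..<r}-{k}. t k - t i) = (\<Prod>i<k. t k - t i) * (\<Prod>i\<in>{Suc k..<r}. t k - t i)"
    unfolding set by (rule prod.union_disjoint) auto
  hence "(-1)^(r-1-k) * (\<Prod>i\<in>{..<r}-{k}. t k - t i) =
     ((-1)^(r-1-k))^2 * ((\<Prod>i<k. t k - t i) * (\<Prod>i\<in>{Suc k..<r}. t i - t k))"
    by (simp add: e power2_eq_square mult_ac)
  also have "\<dots> = (\<Prod>i<k. t k - t i) * (\<Prod>i\<in>{Suc k..<r}. t i - t k)"
    by (simp add: power_even_eq[symmetric] flip: power_mult)
  finally show ?thesis using P1 P2 by simp
qed

lemma ivt_prod:
  fixes p :: "real poly"
  assumes "x < y" "poly p x * poly p y < 0"
  shows "\<exists>z. x < z \<and> z < y \<and> poly p z = 0"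
proof (cases "poly p x < 0")
  case True
  hence "poly p y > 0" using assms(2) by (simp add: mult_less_0_iff)
  thus ?thesis using poly_IVT_pos[OF assms(1) True] by blast
next
  case False
  hence "poly p x > 0" "poly p y < 0" using assms(2) by (auto simp: mult_less_0_iff)
  thus ?thesis using poly_IVT_neg[OF assms(1)] by blast
qed

locale rootsetup =
  fixes r :: nat and t w :: "nat \<Rightarrow> real" and a :: real
  assumes mono: "\<And>i j. i < j \<Longrightarrow> j < r \<Longrightarrow> t i < t j"
  and wpos: "\<And>k. k < r \<Longrightarrow> w k > 0"
  and a0: "a \<noteq> 0"
begin

lemma aa_pos: "a * a > 0" using a0 by (cases "a > 0") (auto intro: mult_pos_pos mult_neg_neg)

definition f :: "real \<Rightarrow> real" where "f x = 1 + a * (\<Sum>k<r. w k / (t k - x))"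

definition Qp :: "real poly" where
  "Qp = (\<Prod>k<r. [:- t k, 1:]) - Polynomial.smult a (\<Sum>k<r. Polynomial.smult (w k) (\<Prod>i\<in>{..<r}-{k}. [:- t i, 1:]))"

lemma poly_Qp: "poly Qp x = (\<Prod>k<r. x - t k) - a * (\<Sum>k<r. w k * (\<Prod>i\<in>{..<r}-{k}. x - t i))"
  by (simp add: Qp_def poly_prod poly_sum)

lemma t_inj: "i < r \<Longrightarrow> j < r \<Longrightarrow> t i = t j \<longleftrightarrow> i = j"
  using mono by (metis less_irrefl nat_neq_iff)

lemma Qp_off: assumes x: "x \<notin> t ` {..<r}"
  shows "poly Qp x = (\<Prod>k<r. x - t k) * f x"
proof -
  have nz: "x - t k \<noteq> 0" if "k < r" for k using x that by auto
  have rem: "(\<Prod>i\<in>{..<r}-{k}. x - t i) = (\<Prod>k<r. x - t k) / (x - t k)" if k: "k < r" for k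
    using prod.remove[of "{..<r}" k "\<lambda>i. x - t i"] k nz[OF k] by simp
  have "a * (\<Sum>k<r. w k * (\<Prod>i\<in>{..<r}-{k}. x - t i)) =
      (\<Prod>k<r. x - t k) * (- a * (\<Sum>k<r. w k / (t k - x)))"
  proof -
    have "(\<Sum>k<r. w k * (\<Prod>i\<in>{..<r}-{k}. x - t i)) = (\<Sum>k<r. (\<Prod>k<r. x - t k) * (- (w k / (t k - x))))"
    proof (intro sum.cong refl)
      fix k assume "k \<in> {..<r}" hence k: "k < r" by simp
      have "t k - x \<noteq> 0" using nz[OF k] by simp
      thus "w k * (\<Prod>i\<in>{..<r}-{k}. x - t i) = (\<Prod>k<r. x - t k) * (- (w k / (t k - x)))"
        using rem[OF k] nz[OF k] by (simp add: field_simps)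
    qed
    thus ?thesis by (simp add: sum_distrib_left sum_negf mult_ac)
  qed
  hence "poly Qp x = (\<Prod>k<r. x - t k) - (\<Prod>k<r. x - t k) * (- a * (\<Sum>k<r. w k / (t k - x)))"
    by (simp only: poly_Qp)
  also have "\<dots> = (\<Prod>k<r. x - t k) * f x" unfolding f_def by (simp add: algebra_simps)
  finally show ?thesis .
qed

lemma Qp_at: assumes k: "k < r"
  shows "poly Qp (t k) = - a * w k * (\<Prod>i\<in>{..<r}-{k}. t k - t i)"
proof -
  have z: "(\<Prod>i<r. t k - t i) = 0" using k by (auto intro: prod_zero)
  have "(\<Sum>j<r. w j * (\<Prod>i\<in>{..<r}-{j}. t k - t i)) = (\<Sum>j<r. if j = k then w k * (\<Prod>i\<in>{..<r}-{k}. t k - t i) else 0)"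
    by (intro sum.cong refl) (use k in \<open>auto intro!: prod_zero\<close>)
  also have "\<dots> = w k * (\<Prod>i\<in>{..<r}-{k}. t k - t i)" using k by simp
  finally show ?thesis by (simp add: poly_Qp z)
qed

lemma Qp_at_sign: assumes k: "k < r"
  shows "a * ((-1)^(r-1-k) * poly Qp (t k)) < 0"
proof -
  have "a * ((-1)^(r-1-k) * poly Qp (t k)) = - (a * a) * w k * ((-1)^(r-1-k) * (\<Prod>i\<in>{..<r}-{k}. t k - t i))"
    by (simp add: Qp_at[OF k])
  moreover have "a * a > 0" by (rule aa_pos)
  moreover have "(-1)^(r-1-k) * (\<Prod>i\<in>{..<r}-{k}. t k - t i) > 0"
    by (rule sign_prod[of r t k]) (use mono k in auto)
  ultimately show ?thesis using wpos[OF k]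
    by (simp add: mult_pos_pos)
qed

lemma Qp_consec: assumes k: "Suc k < r"
  shows "poly Qp (t k) * poly Qp (t (Suc k)) < 0"
proof -
  have e: "r - 1 - k = Suc (r - 1 - Suc k)" using k by simp
  have s1: "a * ((-1)^(r-1-k) * poly Qp (t k)) < 0" using Qp_at_sign k by simp
  have s2: "a * ((-1)^(r-1-Suc k) * poly Qp (t (Suc k))) < 0" using Qp_at_sign k by simp
  have "0 < (a * ((-1)^(r-1-k) * poly Qp (t k))) * (a * ((-1)^(r-1-Suc k) * poly Qp (t (Suc k))))"
    using s1 s2 by (simp add: mult_neg_neg)
  also have "\<dots> = - (a * a) * (((-1)^(r-1-Suc k))^2 * (poly Qp (t k) * poly Qp (t (Suc k))))"
    unfolding e by (simp add: power2_eq_square mult_ac)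
  also have "\<dots> = - (a * a) * (poly Qp (t k) * poly Qp (t (Suc k)))"
    by (simp add: power_even_eq[symmetric] flip: power_mult)
  finally show ?thesis using aa_pos by (simp add: mult_less_0_iff)
qed

end

(* ---- Real2 ---- *)


context rootsetup begin

lemma t_le: "i \<le> j \<Longrightarrow> j < r \<Longrightarrow> t i \<le> t j"
  using mono by (cases "i = j") (auto simp: less_le)

definition W where "W = (\<Sum>k<r. w k)"
lemma W_nonneg: "W \<ge> 0" unfolding W_def by (rule sum_nonneg) (use wpos in \<open>auto simp: less_imp_le\<close>)

lemma Q_big: assumes a: "a > 0" and r: "r > 0"
  shows "poly Qp (t (r-1) + 1 + a * W) > 0"
proof -
  define X where "X = t (r-1) + 1 + a * W"
  have aW: "a * W \<ge> 0" using a W_nonneg by simp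
  have d: "X - t k \<ge> 1 + a * W" if "k < r" for k using t_le[of k "r-1"] that r by (simp add: X_def)
  have x: "X \<notin> t ` {..<r}" using d aW by force
  have P: "(\<Prod>k<r. X - t k) > 0" by (rule prod_pos) (use d aW in force)
  have trm: "w k / (t k - X) \<ge> - (w k / (1 + a * W))" if k: "k < r" for k
  proof -
    have "w k / (X - t k) \<le> w k / (1 + a * W)"
      by (rule divide_left_mono) (use d[OF k] aW wpos[OF k] in auto)
    moreover have "w k / (t k - X) = - (w k / (X - t k))" by (metis minus_diff_eq divide_minus_right)
    ultimately show ?thesis by simp
  qed
  have "(\<Sum>k<r. w k / (t k - X)) \<ge> (\<Sum>k<r. - (w k / (1 + a * W)))" by (rule sum_mono) (use trm in auto)
  also have "(\<Sum>k<r. - (w k / (1 + a * W))) = - (W / (1 + a * W))"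
    by (simp add: W_def sum_negf sum_divide_distrib)
  finally have ineq: "- (W / (1 + a * W)) \<le> (\<Sum>k<r. w k / (t k - X))" .
  have "a * (- (W / (1 + a * W))) \<le> a * (\<Sum>k<r. w k / (t k - X))"
    by (rule mult_left_mono[OF ineq]) (use a in simp)
  moreover have "1 + a * (- (W / (1 + a * W))) = 1 / (1 + a * W)" using aW by (simp add: field_simps)
  moreover have "1 / (1 + a * W) > 0" using aW by simp
  ultimately have "f X > 0" unfolding f_def by linarith
  thus ?thesis using Qp_off[OF x] P unfolding X_def[symmetric] by simp
qed

lemma Q_small: assumes a: "a < 0" and r: "r > 0"
  shows "(-1)^r * poly Qp (t 0 - 1 + a * W) > 0"
proof -
  define X where "X = t 0 - 1 + a * W"
  have aW: "a * W \<le> 0" using a W_nonneg by (simp add: mult_nonpos_nonneg less_imp_le)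
  have d: "t k - X \<ge> 1 - a * W" if "k < r" for k using t_le[of 0 k] that by (simp add: X_def)
  have x: "X \<notin> t ` {..<r}" using d aW by force
  have P: "(\<Prod>k<r. t k - X) > 0" by (rule prod_pos) (use d aW in force)
  have "(\<Prod>k<r. X - t k) = (\<Prod>k<r. - (t k - X))" by simp
  also have "\<dots> = (-1)^r * (\<Prod>k<r. t k - X)" by (subst prod_uminus) simp
  finally have PP: "(-1)^r * (\<Prod>k<r. X - t k) = (\<Prod>k<r. t k - X)" by (simp add: power_mult_distrib[symmetric] flip: power_mult)
  have trm: "w k / (t k - X) \<le> w k / (1 - a * W)" if k: "k < r" for k
    by (rule divide_left_mono) (use d[OF k] aW wpos[OF k] in auto)
  have "(\<Sum>k<r. w k / (t k - X)) \<le> (\<Sum>k<r. w k / (1 - a * W))" by (rule sum_mono) (use trm in auto)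
  also have "(\<Sum>k<r. w k / (1 - a * W)) = W / (1 - a * W)"
    by (simp add: W_def sum_divide_distrib)
  finally have ineq: "(\<Sum>k<r. w k / (t k - X)) \<le> W / (1 - a * W)" .
  have "a * (W / (1 - a * W)) \<le> a * (\<Sum>k<r. w k / (t k - X))"
    by (rule mult_left_mono_neg[OF ineq]) (use a in simp)
  moreover have "1 + a * (W / (1 - a * W)) = 1 / (1 - a * W)" using aW by (simp add: field_simps)
  moreover have "1 / (1 - a * W) > 0" using aW by simp
  ultimately have fX: "f X > 0" unfolding f_def by linarith
  have "(-1)^r * poly Qp X = ((-1)^r * (\<Prod>k<r. X - t k)) * f X" using Qp_off[OF x] by simp
  also have "\<dots> > 0" unfolding PP using P fX by simp
  finally show ?thesis unfolding X_def .
qed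

lemma coeff_deg_Qp: "coeff Qp r = 1 \<and> degree Qp \<le> r"
proof -
  have m: "degree (\<Prod>k<r. [:- t k, 1:]) = r \<and> coeff (\<Prod>k<r. [:- t k, 1:]) r = 1"
    using degree_prod_monic[of r "\<lambda>k. [:- t k, 1:]"] by (simp add: lessThan_atLeast0)
  define S2 where "S2 = Polynomial.smult a (\<Sum>k<r. Polynomial.smult (w k) (\<Prod>i\<in>{..<r}-{k}. [:- t i, 1:]))"
  have dk: "degree (\<Prod>i\<in>{..<r}-{k}. [:- t i, 1:]) < r" if "k < r" for k
  proof -
    have "degree (\<Prod>i\<in>{..<r}-{k}. [:- t i, 1:]) \<le> (\<Sum>i\<in>{..<r}-{k}. 1)"
      using degree_prod_sum_le[of "{..<r}-{k}" "\<lambda>i. [:- t i, 1:]"] by (simp add: o_def)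
    thus ?thesis using that by simp
  qed
  have cS2: "coeff S2 r = 0"
    unfolding S2_def by (auto simp: coeff_sum intro!: sum.neutral coeff_eq_0 dest: dk)
  have dS2: "degree S2 \<le> r"
    unfolding S2_def
    by (rule degree_le) (auto simp: coeff_sum intro!: sum.neutral coeff_eq_0 less_trans[OF dk])
  have "Qp = (\<Prod>k<r. [:- t k, 1:]) - S2" by (simp add: Qp_def S2_def)
  moreover have "degree ((\<Prod>k<r. [:- t k, 1:]) - S2) \<le> r"
    by (rule degree_diff_le) (use m dS2 in auto)
  ultimately show ?thesis using m cS2 by simp
qed

lemma Qp_nz: "Qp \<noteq> 0" using coeff_deg_Qp by auto

lemma Qp_at_nz: "k < r \<Longrightarrow> poly Qp (t k) \<noteq> 0"
  using Qp_at_sign[of k] by auto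

lemma roots_from_intervals:
  fixes lo hi :: "nat \<Rightarrow> real"
  assumes iv: "\<And>k. k < r \<Longrightarrow> lo k < hi k \<and> poly Qp (lo k) * poly Qp (hi k) < 0"
  and ord: "\<And>i j. i < j \<Longrightarrow> j < r \<Longrightarrow> hi i \<le> lo j"
  shows "\<exists>m. (\<forall>k<r. lo k < m k \<and> m k < hi k) \<and> (\<forall>i j. i < j \<longrightarrow> j < r \<longrightarrow> m i < m j)
     \<and> {x. poly Qp x = 0} = m ` {..<r} \<and> Qp = (\<Prod>k<r. [:- m k, 1:])"
proof -
  define m where "m = (\<lambda>k. SOME z. lo k < z \<and> z < hi k \<and> poly Qp z = 0)"
  have mk: "lo k < m k \<and> m k < hi k \<and> poly Qp (m k) = 0" if "k < r" for k
    unfolding m_def by (rule someI_ex) (use ivt_prod[of "lo k" "hi k" Qp] iv[OF that] in auto)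
  have mono_m: "m i < m j" if "i < j" "j < r" for i j
    using mk[of i] mk[of j] ord[OF that] that by fastforce
  have inj: "inj_on m {..<r}" 
    by (rule inj_onI) (metis lessThan_iff mono_m nat_neq_iff less_irrefl)
  have card: "card (m ` {..<r}) = r" using card_image[OF inj] by simp
  have sub: "m ` {..<r} \<subseteq> {x. poly Qp x = 0}" using mk by auto
  have fin: "finite {x. poly Qp x = 0}" by (rule poly_roots_finite[OF Qp_nz])
  have "card {x. poly Qp x = 0} \<le> r" using card_poly_roots_bound[OF Qp_nz] coeff_deg_Qp by linarith
  hence eq: "{x. poly Qp x = 0} = m ` {..<r}"
    using card_subset_eq[OF fin sub] card by (metis card_seteq fin sub)
  have pm: "degree (\<Prod>k<r. [:- m k, 1:]) = r \<and> coeff (\<Prod>k<r. [:- m k, 1:]) r = 1"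
    using degree_prod_monic[of r "\<lambda>k. [:- m k, 1:]"] by (simp add: lessThan_atLeast0)
  have "Qp = (\<Prod>k<r. [:- m k, 1:])"
  proof (rule poly_eqI_degree_lead_coeff[of _ r _ "m ` {..<r}"])
    show "coeff Qp r = coeff (\<Prod>k<r. [:- m k, 1:]) r" using pm coeff_deg_Qp by simp
    show "r \<le> card (m ` {..<r})" using card by simp
    show "degree Qp \<le> r" using coeff_deg_Qp by simp
    show "degree (\<Prod>k<r. [:- m k, 1:]) \<le> r" using pm by simp
    fix z assume "z \<in> m ` {..<r}"
    then obtain k where k: "k < r" "z = m k" by auto
    have "poly (\<Prod>k<r. [:- m k, 1:]) z = 0" using k by (auto simp: poly_prod intro!: prod_zero)
    thus "poly Qp z = poly (\<Prod>k<r. [:- m k, 1:]) z" using mk[OF k(1)] k by simp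
  qed
  thus ?thesis using mk mono_m eq by blast
qed

lemma roots_main: assumes r: "r > 0"
  shows "\<exists>m. (\<forall>i j. i < j \<longrightarrow> j < r \<longrightarrow> m i < m j)
     \<and> {x. poly Qp x = 0} = m ` {..<r} \<and> Qp = (\<Prod>k<r. [:- m k, 1:])
     \<and> (a > 0 \<longrightarrow> (\<forall>k<r. t k < m k \<and> (Suc k < r \<longrightarrow> m k < t (Suc k))))
     \<and> (a < 0 \<longrightarrow> (\<forall>k<r. m k < t k \<and> (Suc k < r \<longrightarrow> t k < m (Suc k))))"
proof (cases "a > 0")
  case True
  define X where "X = t (r-1) + 1 + a * W"
  define lo where "lo = t"
  define hi where "hi = (\<lambda>k. if Suc k < r then t (Suc k) else X)"
  have QX: "poly Qp X > 0" using Q_big[OF True r] by (simp add: X_def)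
  have Qlast: "poly Qp (t (r-1)) < 0" using Qp_at_sign[of "r-1"] r True by (simp add: mult_less_0_iff)
  have aW: "a * W \<ge> 0" using True W_nonneg by simp
  have iv: "lo k < hi k \<and> poly Qp (lo k) * poly Qp (hi k) < 0" if k: "k < r" for k
  proof (cases "Suc k < r")
    case True thus ?thesis using Qp_consec[OF True] mono[of k "Suc k"] by (simp add: lo_def hi_def)
  next
    case False
    hence "k = r - 1" using k by simp
    thus ?thesis using False QX Qlast aW by (simp add: lo_def hi_def X_def mult_neg_pos)
  qed
  have ord: "hi i \<le> lo j" if "i < j" "j < r" for i j
    using that t_le[of "Suc i" j] by (simp add: lo_def hi_def)
  obtain m where m: "\<forall>k<r. lo k < m k \<and> m k < hi k" "\<forall>i j. i < j \<longrightarrow> j < r \<longrightarrow> m i < m j"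
     "{x. poly Qp x = 0} = m ` {..<r}" "Qp = (\<Prod>k<r. [:- m k, 1:])"
    using roots_from_intervals[of lo hi, OF iv ord] by blast
  have "\<forall>k<r. t k < m k \<and> (Suc k < r \<longrightarrow> m k < t (Suc k))"
    using m(1) by (auto simp: lo_def hi_def)
  thus ?thesis using m True by auto
next
  case False
  hence an: "a < 0" using a0 by simp
  define X where "X = t 0 - 1 + a * W"
  define lo where "lo = (\<lambda>k. if k = 0 then X else t (k - 1))"
  define hi where "hi = t"
  have QX: "(-1)^r * poly Qp X > 0" using Q_small[OF an r] by (simp add: X_def)
  have Q0: "a * ((-1)^(r-1) * poly Qp (t 0)) < 0" using Qp_at_sign[of 0] r by simp
  hence Q0': "(-1)^(r-1) * poly Qp (t 0) > 0" using an by (simp add: mult_less_0_iff)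
  have aW: "a * W \<le> 0" using an W_nonneg by (simp add: mult_nonpos_nonneg less_imp_le)
  have sg: "((-1::real)^r) * (-1)^(r-1) = -1" using r by (cases r) auto
  have iv: "lo k < hi k \<and> poly Qp (lo k) * poly Qp (hi k) < 0" if k: "k < r" for k
  proof (cases k)
    case 0
    have "0 < ((-1)^r * poly Qp X) * ((-1)^(r-1) * poly Qp (t 0))" using QX Q0' by simp
    also have "\<dots> = - (poly Qp X * poly Qp (t 0))" using sg
      by (metis (no_types, lifting) mult.commute mult.left_commute mult_minus1)
    finally show ?thesis using 0 aW by (simp add: lo_def hi_def X_def)
  next
    case (Suc k')
    thus ?thesis using Qp_consec[of k'] mono[of k' "Suc k'"] k by (simp add: lo_def hi_def)
  qed
  have ord: "hi i \<le> lo j" if "i < j" "j < r" for i j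
    using that t_le[of i "j - 1"] by (simp add: lo_def hi_def)
  obtain m where m: "\<forall>k<r. lo k < m k \<and> m k < hi k" "\<forall>i j. i < j \<longrightarrow> j < r \<longrightarrow> m i < m j"
     "{x. poly Qp x = 0} = m ` {..<r}" "Qp = (\<Prod>k<r. [:- m k, 1:])"
    using roots_from_intervals[of lo hi, OF iv ord] by blast
  have "\<forall>k<r. m k < t k \<and> (Suc k < r \<longrightarrow> t k < m (Suc k))"
    using m(1) by (auto simp: lo_def hi_def)
  thus ?thesis using m an by auto
qed

lemma final_real:
  shows "\<exists>m. (\<forall>i j. i < j \<longrightarrow> j < r \<longrightarrow> m i < m j)
     \<and> {x. x \<notin> t ` {..<r} \<and> f x = 0} = m ` {..<r}
     \<and> (\<forall>x. x \<notin> t ` {..<r} \<longrightarrow> (\<Prod>k<r. m k - x) = (\<Prod>k<r. t k - x) * f x)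
     \<and> (a > 0 \<longrightarrow> (\<forall>k<r. t k < m k \<and> (Suc k < r \<longrightarrow> m k < t (Suc k))))
     \<and> (a < 0 \<longrightarrow> (\<forall>k<r. m k < t k \<and> (Suc k < r \<longrightarrow> t k < m (Suc k))))"
proof (cases "r = 0")
  case True
  thus ?thesis unfolding f_def by auto
next
  case False
  then obtain m where m: "\<forall>i j. i < j \<longrightarrow> j < r \<longrightarrow> m i < m j"
     "{x. poly Qp x = 0} = m ` {..<r}" "Qp = (\<Prod>k<r. [:- m k, 1:])"
     "a > 0 \<longrightarrow> (\<forall>k<r. t k < m k \<and> (Suc k < r \<longrightarrow> m k < t (Suc k)))"
     "a < 0 \<longrightarrow> (\<forall>k<r. m k < t k \<and> (Suc k < r \<longrightarrow> t k < m (Suc k)))"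
    using roots_main by blast
  have nzP: "(\<Prod>k<r. x - t k) \<noteq> 0" if "x \<notin> t ` {..<r}" for x using that by auto
  have R: "{x. x \<notin> t ` {..<r} \<and> f x = 0} = {x. poly Qp x = 0}"
  proof (rule Set.set_eqI)
    fix x
    show "x \<in> {x. x \<notin> t ` {..<r} \<and> f x = 0} \<longleftrightarrow> x \<in> {x. poly Qp x = 0}"
    proof (cases "x \<in> t ` {..<r}")
      case True
      then obtain k where "k < r" "x = t k" by auto
      thus ?thesis using Qp_at_nz by auto
    next
      case False
      thus ?thesis using Qp_off[OF False] nzP[OF False] by auto
    qed
  qed
  have pid: "(\<Prod>k<r. m k - x) = (\<Prod>k<r. t k - x) * f x" if x: "x \<notin> t ` {..<r}" for x
  proof -
    have e1: "(\<Prod>k<r. m k - x) = (-1)^r * (\<Prod>k<r. x - m k)"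
      using prod_uminus[of "\<lambda>k. x - m k" "{..<r}"] by simp
    have e2: "(\<Prod>k<r. t k - x) = (-1)^r * (\<Prod>k<r. x - t k)"
      using prod_uminus[of "\<lambda>k. x - t k" "{..<r}"] by simp
    have "(\<Prod>k<r. x - m k) = poly Qp x" using m(3) by (simp add: poly_prod)
    also have "\<dots> = (\<Prod>k<r. x - t k) * f x" by (rule Qp_off[OF x])
    finally show ?thesis using e1 e2 by simp
  qed
  show ?thesis using m R pid by auto
qed

end

(* ---- Main1 ---- *)


locale ms =
  fixes n :: nat and H :: "complex mat" and a :: real
  assumes herm: "hermitian_mat n H" and npos: "n > 0"
begin

definition M where "M = H + complex_of_real a \<cdot>\<^sub>m ones_mat n"

lemma H_carrier[simp]: "H \<in> carrier_mat n n" using herm by (simp add: hermitian_mat_def)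
lemma M_carrier[simp]: "M \<in> carrier_mat n n" by (simp add: M_def ones_mat_def)

lemma M_idx: "i < n \<Longrightarrow> k < n \<Longrightarrow> M $$ (i,k) = H $$ (i,k) + of_real a"
  by (simp add: M_def ones_mat_def)

lemma M_herm: "hermitian_mat n M"
  unfolding hermitian_mat_def
proof
  show "M \<in> carrier_mat n n" by simp
  show "ctrans M = M"
  proof (rule eq_matI)
    fix i k assume "i < dim_row M" "k < dim_col M"
    hence ik: "i < n" "k < n" using carrier_matD[OF M_carrier] by auto
    thus "ctrans M $$ (i,k) = M $$ (i,k)"
      using herm_idx[OF herm ik] carrier_matD[OF M_carrier] by (simp add: ctrans_def M_idx)
  qed (use carrier_matD[OF M_carrier] in \<open>auto simp: ctrans_def\<close>)
qed

sublocale HH: hm n H by unfold_locales (rule herm)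
sublocale MM: hm n M by unfold_locales (rule M_herm)

definition j where "j = ones_vec n"
lemma j_carrier[simp]: "j \<in> carrier_vec n" by (simp add: j_def ones_vec_def)
lemma j_idx[simp]: "i < n \<Longrightarrow> j $ i = 1" by (simp add: j_def ones_vec_def)

definition E where "E \<theta> = eig_proj n H (of_real \<theta>) *\<^sub>v j"
definition c where "c \<theta> = Re (ipn n (E \<theta>) (E \<theta>))"
definition T where "T = main_eigenvalues n H"

lemma E_carrier[simp]: "\<theta> \<in> HH.S \<Longrightarrow> E \<theta> \<in> carrier_vec n" by (simp add: E_def)

lemma ipn_j_sum: "v \<in> carrier_vec n \<Longrightarrow> ipn n v j = (\<Sum>k<n. v $ k)"
  by (simp add: ipn_def)
lemma ipn_j_sum2: "v \<in> carrier_vec n \<Longrightarrow> ipn n j v = cnj (\<Sum>k<n. v $ k)"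
  by (simp add: ipn_def)

lemma E_self: assumes th: "\<theta> \<in> HH.S"
  shows "ipn n j (E \<theta>) = of_real (c \<theta>)" "ipn n (E \<theta>) (E \<theta>) = of_real (c \<theta>)"
    "ipn n (E \<theta>) j = of_real (c \<theta>)"
proof -
  have "ipn n (E \<theta>) (E \<theta>) = ipn n j (eig_proj n H (of_real \<theta>) *\<^sub>v E \<theta>)"
    unfolding E_def by (rule HH.P_ip[OF th]) (use th in auto)
  also have "\<dots> = ipn n j (E \<theta>)" unfolding E_def using HH.P_idem[OF th j_carrier] by simp
  finally have e: "ipn n (E \<theta>) (E \<theta>) = ipn n j (E \<theta>)" .
  have r: "ipn n (E \<theta>) (E \<theta>) = of_real (c \<theta>)" unfolding c_def by (simp add: ipn_self)
  show "ipn n (E \<theta>) (E \<theta>) = of_real (c \<theta>)" by (rule r)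
  show "ipn n j (E \<theta>) = of_real (c \<theta>)" using e r by simp
  show "ipn n (E \<theta>) j = of_real (c \<theta>)" using e r ipn_cnj[of n j "E \<theta>"] by (metis complex_cnj_complex_of_real)
qed

lemma c_nonneg: "c \<theta> \<ge> 0" by (simp add: c_def ipn_self_Re sum_nonneg)

lemma T_eq: "T = {\<theta> \<in> HH.S. c \<theta> \<noteq> 0}"
proof -
  have "main_angle n H \<theta> \<noteq> 0 \<longleftrightarrow> c \<theta> \<noteq> 0" if th: "\<theta> \<in> HH.S" for \<theta>
  proof -
    have "main_angle n H \<theta> \<noteq> 0 \<longleftrightarrow> E \<theta> \<noteq> 0\<^sub>v n"
      by (rule ma_props(2)[OF _ E_carrier[OF th] npos]) (simp add: E_def j_def)
    also have "\<dots> \<longleftrightarrow> ipn n (E \<theta>) (E \<theta>) \<noteq> 0"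
      using ipn_self_zero[OF E_carrier[OF th]] by (auto simp: ipn_zero1)
    also have "\<dots> \<longleftrightarrow> c \<theta> \<noteq> 0" using E_self(2)[OF th] by simp
    finally show ?thesis .
  qed
  thus ?thesis unfolding T_def main_eigenvalues_def HH.S_iff[symmetric] by auto
qed

lemma T_sub: "T \<subseteq> HH.S" unfolding T_eq by auto
lemma T_finite: "finite T" using T_sub HH.S_finite by (rule finite_subset)
lemma c_pos: "\<theta> \<in> T \<Longrightarrow> c \<theta> > 0" using c_nonneg[of \<theta>] unfolding T_eq by auto

lemma E_zero: assumes "\<theta> \<in> HH.S" "\<theta> \<notin> T" shows "E \<theta> = 0\<^sub>v n"
proof -
  have "c \<theta> = 0" using assms unfolding T_eq by auto
  hence "ipn n (E \<theta>) (E \<theta>) = 0" using E_self(2)[OF assms(1)] by simp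
  thus ?thesis using ipn_self_zero[OF E_carrier[OF assms(1)]] by simp
qed

lemma compl_T: assumes i: "i < n" shows "(\<Sum>\<theta>\<in>T. E \<theta> $ i) = 1"
proof -
  have "(\<Sum>\<theta>\<in>HH.S. E \<theta> $ i) = 1" unfolding E_def using HH.completeness[OF j_carrier i] i by simp
  moreover have "(\<Sum>\<theta>\<in>HH.S. E \<theta> $ i) = (\<Sum>\<theta>\<in>T. E \<theta> $ i)"
    by (rule sum.mono_neutral_right[OF HH.S_finite T_sub]) (use E_zero i in auto)
  ultimately show ?thesis by simp
qed

lemma Mv_idx: assumes v: "v \<in> carrier_vec n" and i: "i < n"
  shows "(M *\<^sub>v v) $ i = (H *\<^sub>v v) $ i + of_real a * (\<Sum>k<n. v $ k)"
proof -
  have "(M *\<^sub>v v) $ i = (\<Sum>k<n. (H $$ (i,k) + of_real a) * v $ k)"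
    using mat_vec_idx[OF M_carrier v i] M_idx[OF i] by simp
  also have "\<dots> = (\<Sum>k<n. H $$ (i,k) * v $ k) + of_real a * (\<Sum>k<n. v $ k)"
    by (simp add: distrib_right sum.distrib sum_distrib_left)
  also have "(\<Sum>k<n. H $$ (i,k) * v $ k) = (H *\<^sub>v v) $ i"
    using mat_vec_idx[OF H_carrier v i] by simp
  finally show ?thesis .
qed

end

(* ---- Main2 ---- *)


context ms begin

definition f where "f \<mu> = 1 + a * (\<Sum>\<theta>\<in>T. c \<theta> / (\<theta> - \<mu>))"

lemma sC: "(\<Sum>\<theta>\<in>T. of_real (c \<theta>) / (of_real \<theta> - of_real \<mu>) :: complex) = of_real (\<Sum>\<theta>\<in>T. c \<theta> / (\<theta> - \<mu>))"
  by simp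

lemma ipn_H_w: assumes w: "w \<in> carrier_vec n" and x: "x \<in> carrier_vec n"
  and Hw: "\<And>i. i < n \<Longrightarrow> (H *\<^sub>v w) $ i = z * w $ i - e"
  shows "ipn n (H *\<^sub>v w) x = z * ipn n w x - e * ipn n j x"
proof -
  have "ipn n (H *\<^sub>v w) x = (\<Sum>i<n. (z * w $ i - e) * cnj (x $ i))"
    unfolding ipn_def by (intro sum.cong refl) (simp add: Hw del: index_mult_mat_vec)
  also have "\<dots> = z * ipn n w x - e * ipn n j x"
    unfolding ipn_def by (simp add: algebra_simps sum_subtractf sum_distrib_left)
  finally show ?thesis .
qed

lemma claimB: assumes a0: "a \<noteq> 0" and mu: "\<mu> \<in> main_eigenvalues n M"
  shows "\<mu> \<notin> T \<and> f \<mu> = 0"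
proof -
  have muS: "\<mu> \<in> MM.S" and ma: "main_angle n M \<mu> \<noteq> 0"
    using mu unfolding main_eigenvalues_def MM.S_iff by auto
  define F where "F = eig_proj n M (of_real \<mu>)"
  define w where "w = F *\<^sub>v j"
  have wc: "w \<in> carrier_vec n" unfolding w_def F_def using muS by simp
  have wnz: "w \<noteq> 0\<^sub>v n"
    using ma_props(2)[OF _ wc npos, of M \<mu>] ma by (simp add: w_def F_def j_def)
  have Mw: "M *\<^sub>v w = of_real \<mu> \<cdot>\<^sub>v w" unfolding w_def F_def by (rule MM.P_eig[OF muS j_carrier])
  define d where "d = ipn n w w"
  have dnz: "d \<noteq> 0" unfolding d_def using ipn_self_zero[OF wc] wnz by auto
  have dr: "cnj d = d" unfolding d_def by (simp add: ipn_self)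
  have "d = ipn n j (F *\<^sub>v w)" unfolding d_def w_def F_def
    by (rule MM.P_ip[OF muS]) (use muS in auto)
  also have "F *\<^sub>v w = w" unfolding w_def F_def by (rule MM.P_idem[OF muS j_carrier])
  finally have "d = ipn n j w" .
  hence dj: "ipn n w j = d" using ipn_cnj[of n j w] dr by simp
  have Hw: "(H *\<^sub>v w) $ i = of_real \<mu> * w $ i - of_real a * d" if i: "i < n" for i
  proof -
    have "(M *\<^sub>v w) $ i = (H *\<^sub>v w) $ i + of_real a * (\<Sum>k<n. w $ k)" by (rule Mv_idx[OF wc i])
    also have "(\<Sum>k<n. w $ k) = d" using dj ipn_j_sum[OF wc] by simp
    finally show ?thesis using Mw i wc by (simp add: algebra_simps)
  qed
  have key: "(of_real \<theta> - of_real \<mu>) * ipn n w (E \<theta>) = - (of_real a * d * of_real (c \<theta>))"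
    if th: "\<theta> \<in> HH.S" for \<theta>
  proof -
    have Ec: "E \<theta> \<in> carrier_vec n" using th by simp
    have "ipn n (H *\<^sub>v w) (E \<theta>) = ipn n w (H *\<^sub>v E \<theta>)" by (rule ipn_herm[OF herm wc Ec])
    also have "H *\<^sub>v E \<theta> = of_real \<theta> \<cdot>\<^sub>v E \<theta>" unfolding E_def by (rule HH.P_eig[OF th j_carrier])
    also have "ipn n w (of_real \<theta> \<cdot>\<^sub>v E \<theta>) = of_real \<theta> * ipn n w (E \<theta>)"
      using Ec by (simp add: ipn_smult2)
    finally have e1: "ipn n (H *\<^sub>v w) (E \<theta>) = of_real \<theta> * ipn n w (E \<theta>)" .
    have e2: "ipn n (H *\<^sub>v w) (E \<theta>) = of_real \<mu> * ipn n w (E \<theta>) - of_real a * d * of_real (c \<theta>)"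
      using ipn_H_w[OF wc Ec Hw] E_self(1)[OF th] by simp
    show ?thesis using e1 e2 by (simp add: algebra_simps)
  qed
  have notT: "\<mu> \<notin> T"
  proof
    assume mT: "\<mu> \<in> T"
    hence mS: "\<mu> \<in> HH.S" and "c \<mu> \<noteq> 0" unfolding T_eq by auto
    have "of_real a * d * of_real (c \<mu>) = 0" using key[OF mS] by simp
    thus False using a0 dnz \<open>c \<mu> \<noteq> 0\<close> by simp
  qed
  have wE: "ipn n w (E \<theta>) = - (of_real a * d * of_real (c \<theta>)) / (of_real \<theta> - of_real \<mu>)"
    if th: "\<theta> \<in> T" for \<theta>
  proof -
    have "\<theta> \<noteq> \<mu>" using th notT by auto
    hence "(of_real \<theta> - of_real \<mu> :: complex) \<noteq> 0" by simp
    thus ?thesis using key[of \<theta>] th T_sub by (auto simp: field_simps)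
  qed
  define s where "s = (\<Sum>\<theta>\<in>T. c \<theta> / (\<theta> - \<mu>))"
  have "d = ipn n w j" using dj by simp
  also have "\<dots> = (\<Sum>i<n. w $ i * cnj (\<Sum>\<theta>\<in>T. E \<theta> $ i))"
    unfolding ipn_def by (intro sum.cong refl) (simp add: compl_T)
  also have "\<dots> = (\<Sum>\<theta>\<in>T. ipn n w (E \<theta>))"
    unfolding ipn_def cnj_sum sum_distrib_left by (rule sum.swap)
  also have "\<dots> = (\<Sum>\<theta>\<in>T. - (of_real a * d * of_real (c \<theta>)) / (of_real \<theta> - of_real \<mu>))"
    by (intro sum.cong refl) (rule wE)
  also have "\<dots> = - (of_real a * d) * (\<Sum>\<theta>\<in>T. of_real (c \<theta>) / (of_real \<theta> - of_real \<mu>))"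
    by (simp add: sum_distrib_left sum_negf)
  also have "\<dots> = - (of_real a * d) * of_real s" unfolding s_def by (simp only: sC)
  finally have e: "d = - (of_real a * d) * of_real s" .
  have "d * (1 + of_real a * of_real s) = d - (- (of_real a * d) * of_real s)" by (simp add: algebra_simps)
  also have "\<dots> = 0" by (metis e diff_self)
  finally have "1 + of_real a * of_real s = (0::complex)" using dnz by simp
  hence "of_real (f \<mu>) = (0::complex)" unfolding f_def s_def by simp
  hence "f \<mu> = 0" by (simp only: of_real_eq_0_iff)
  thus ?thesis using notT by simp
qed

end

(* ---- Main3 ---- *)


context ms begin

lemma claimA: assumes notT: "\<mu> \<notin> T" and f0: "f \<mu> = 0"
  shows "\<mu> \<in> main_eigenvalues n M"
proof -
  define s where "s = (\<Sum>\<theta>\<in>T. c \<theta> / (\<theta> - \<mu>))"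
  have as: "1 + a * s = 0" using f0 by (simp add: f_def s_def)
  have nz: "(of_real \<theta> - of_real \<mu> :: complex) \<noteq> 0" if "\<theta> \<in> T" for \<theta> using that notT by auto
  define v where "v = vec n (\<lambda>i. \<Sum>\<theta>\<in>T. E \<theta> $ i / (of_real \<theta> - of_real \<mu>))"
  have vc: "v \<in> carrier_vec n" by (simp add: v_def)
  have vi: "v $ i = (\<Sum>\<theta>\<in>T. E \<theta> $ i / (of_real \<theta> - of_real \<mu>))" if "i < n" for i
    using that by (simp add: v_def)
  have Ec: "E \<theta> \<in> carrier_vec n" if "\<theta> \<in> T" for \<theta> using that T_sub by auto
  have HE: "(H *\<^sub>v E \<theta>) $ i = of_real \<theta> * E \<theta> $ i" if "\<theta> \<in> T" "i < n" for \<theta> i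
  proof -
    have "H *\<^sub>v E \<theta> = of_real \<theta> \<cdot>\<^sub>v E \<theta>" unfolding E_def
      by (rule HH.P_eig) (use that T_sub in auto)
    thus ?thesis using that Ec[OF that(1)] by simp
  qed
  have Hv: "(H *\<^sub>v v) $ i = (\<Sum>\<theta>\<in>T. of_real \<theta> * E \<theta> $ i / (of_real \<theta> - of_real \<mu>))" if i: "i < n" for i
  proof -
    have "(H *\<^sub>v v) $ i = (\<Sum>k<n. H $$ (i,k) * (\<Sum>\<theta>\<in>T. E \<theta> $ k / (of_real \<theta> - of_real \<mu>)))"
      using mat_vec_idx[OF H_carrier vc i] by (simp add: vi)
    also have "\<dots> = (\<Sum>\<theta>\<in>T. \<Sum>k<n. H $$ (i,k) * E \<theta> $ k / (of_real \<theta> - of_real \<mu>))"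
      by (simp add: sum_distrib_left sum.swap[of _ T] mult.assoc)
    also have "\<dots> = (\<Sum>\<theta>\<in>T. (H *\<^sub>v E \<theta>) $ i / (of_real \<theta> - of_real \<mu>))"
      by (intro sum.cong refl) (simp add: mat_vec_idx[OF H_carrier Ec i] sum_divide_distrib del: index_mult_mat_vec)
    also have "\<dots> = (\<Sum>\<theta>\<in>T. of_real \<theta> * E \<theta> $ i / (of_real \<theta> - of_real \<mu>))"
      by (intro sum.cong refl) (simp add: HE i del: index_mult_mat_vec)
    finally show ?thesis .
  qed
  have sv: "(\<Sum>k<n. v $ k) = of_real s"
  proof -
    have "(\<Sum>k<n. v $ k) = (\<Sum>\<theta>\<in>T. (\<Sum>k<n. E \<theta> $ k) / (of_real \<theta> - of_real \<mu>))"
      by (simp add: vi sum.swap[of _ T] sum_divide_distrib)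
    also have "\<dots> = (\<Sum>\<theta>\<in>T. of_real (c \<theta>) / (of_real \<theta> - of_real \<mu>))"
      by (intro sum.cong refl) (metis E_self(3) Ec ipn_j_sum T_sub subsetD)
    also have "\<dots> = of_real s" unfolding s_def by (rule sC)
    finally show ?thesis .
  qed
  have Mv: "M *\<^sub>v v = of_real \<mu> \<cdot>\<^sub>v v"
  proof (rule eq_vecI)
    fix i assume "i < dim_vec (of_real \<mu> \<cdot>\<^sub>v v)" hence i: "i < n" using vc by simp
    have "(M *\<^sub>v v) $ i - of_real \<mu> * v $ i =
      (\<Sum>\<theta>\<in>T. of_real \<theta> * E \<theta> $ i / (of_real \<theta> - of_real \<mu>)) + of_real a * of_real s
       - (\<Sum>\<theta>\<in>T. of_real \<mu> * E \<theta> $ i / (of_real \<theta> - of_real \<mu>))"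
      using Mv_idx[OF vc i] Hv[OF i] sv vi[OF i] by (simp add: sum_distrib_left)
    also have "\<dots> = (\<Sum>\<theta>\<in>T. E \<theta> $ i) + of_real a * of_real s"
    proof -
      have "(\<Sum>\<theta>\<in>T. of_real \<theta> * E \<theta> $ i / (of_real \<theta> - of_real \<mu>)) -
            (\<Sum>\<theta>\<in>T. of_real \<mu> * E \<theta> $ i / (of_real \<theta> - of_real \<mu>)) = (\<Sum>\<theta>\<in>T. E \<theta> $ i)"
        unfolding sum_subtractf[symmetric]
      proof (intro sum.cong refl)
        fix \<theta> assume th: "\<theta> \<in> T"
        show "of_real \<theta> * E \<theta> $ i / (of_real \<theta> - of_real \<mu>) - of_real \<mu> * E \<theta> $ i / (of_real \<theta> - of_real \<mu>) = E \<theta> $ i"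
        proof -
          have "of_real \<theta> * E \<theta> $ i / (of_real \<theta> - of_real \<mu>) - of_real \<mu> * E \<theta> $ i / (of_real \<theta> - of_real \<mu>)
              = ((of_real \<theta> - of_real \<mu>) * E \<theta> $ i) / (of_real \<theta> - of_real \<mu>)"
            by (simp only: diff_divide_distrib left_diff_distrib)
          also have "\<dots> = E \<theta> $ i" using nz[OF th] by simp
          finally show ?thesis .
        qed
      qed
      thus ?thesis by simp
    qed
    also have "\<dots> = of_real (1 + a * s)" using compl_T[OF i] by simp
    also have "\<dots> = 0" using as by simp
    finally show "(M *\<^sub>v v) $ i = (of_real \<mu> \<cdot>\<^sub>v v) $ i" using i vc by simp
  qed (use vc in simp)
  have vnz: "v \<noteq> 0\<^sub>v n"
  proof
    assume "v = 0\<^sub>v n"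
    hence "(\<Sum>k<n. v $ k) = 0" by simp
    hence "s = 0" using sv by simp
    thus False using as by simp
  qed
  have muS: "\<mu> \<in> MM.S" unfolding MM.S_iff eigenvalue_def eigenvector_def
    using vc vnz Mv by auto
  define F where "F = eig_proj n M (of_real \<mu>)"
  have Fv: "F *\<^sub>v v = v" unfolding F_def by (rule MM.P_fix[OF muS vc Mv])
  have "ipn n (F *\<^sub>v j) v = ipn n j (F *\<^sub>v v)" unfolding F_def by (rule MM.P_ip[OF muS j_carrier vc])
  also have "\<dots> = ipn n j v" using Fv by simp
  also have "\<dots> = of_real s" using ipn_j_sum2[OF vc] sv by simp
  finally have ipv: "ipn n (F *\<^sub>v j) v = of_real s" .
  have "s \<noteq> 0" using as by auto
  hence "F *\<^sub>v j \<noteq> 0\<^sub>v n" using ipv by (auto simp: ipn_zero1)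
  hence "main_angle n M \<mu> \<noteq> 0"
    using ma_props(2)[of "F *\<^sub>v j" n M \<mu>] npos muS MM.P_vec_carrier[OF muS j_carrier]
    by (simp add: F_def j_def)
  thus ?thesis unfolding main_eigenvalues_def using muS MM.S_iff by auto
qed

lemma main_M: assumes "a \<noteq> 0" shows "main_eigenvalues n M = {x. x \<notin> T \<and> f x = 0}"
  using claimA claimB[OF assms] by blast

end

(* ---- Final ---- *)


lemma sum_sorted_reindex:
  fixes T :: "real set"
  assumes fin: "finite T"
  shows "(\<Sum>\<theta>\<in>T. g \<theta>) = (\<Sum>k<card T. g (sorted_list_of_set T ! k))"
proof -
  let ?l = "sorted_list_of_set T"
  have "(\<Sum>\<theta>\<in>T. g \<theta>) = (\<Sum>\<theta>\<in>set ?l. g \<theta>)" using fin by simp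
  also have "\<dots> = sum_list (map g ?l)" by (rule sum.distinct_set_conv_list) simp
  also have "\<dots> = (\<Sum>k<length ?l. g (?l ! k))"
    by (simp add: sum_list_sum_nth atLeast0LessThan)
  finally show ?thesis by simp
qed

lemma image_sorted: assumes fin: "finite T"
  shows "(\<lambda>k. sorted_list_of_set T ! k) ` {..<card T} = T"
proof -
  have "T = set (sorted_list_of_set T)" using fin by simp
  also have "\<dots> = (\<lambda>k. sorted_list_of_set T ! k) ` {..<card T}"
    by (auto simp: set_conv_nth)
  finally show ?thesis by simp
qed

lemma main_empty0: "main_eigenvalues 0 X = {}"
  by (simp add: main_eigenvalues_def ma_zero_n)

theorem theorem2p2:
  fixes n :: nat and H :: "complex mat" and a :: real
  assumes herm: "hermitian_mat n H"
  defines "M \<equiv> H + complex_of_real a \<cdot>\<^sub>m ones_mat n"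
  defines "\<tau> \<equiv> sorted_list_of_set (main_eigenvalues n H)"
  defines "\<mu> \<equiv> sorted_list_of_set (main_eigenvalues n M)"
  defines "r \<equiv> card (main_eigenvalues n H)"
  defines "s \<equiv> card (main_eigenvalues n M)"
  shows "finite (main_eigenvalues n H) \<and> finite (main_eigenvalues n M) \<and> r = s
    \<and> (\<forall>x::real. x \<notin> main_eigenvalues n H \<longrightarrow>
          (\<Prod>i<r. \<mu> ! i - x) =
          (\<Prod>i<r. \<tau> ! i - x) *
            (1 + a * (\<Sum>j<r. real n * (main_angle n H (\<tau> ! j))^2 / (\<tau> ! j - x))))
    \<and> (a > 0 \<longrightarrow> (\<forall>i<r. \<tau> ! i < \<mu> ! i \<and> (i + 1 < r \<longrightarrow> \<mu> ! i < \<tau> ! (i + 1))))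
    \<and> (a < 0 \<longrightarrow> (\<forall>i<r. \<mu> ! i < \<tau> ! i \<and> (i + 1 < r \<longrightarrow> \<tau> ! i < \<mu> ! (i + 1))))"
proof (cases "n = 0")
  case True
  hence "main_eigenvalues n H = {}" "main_eigenvalues n M = {}" by (simp_all add: main_empty0)
  thus ?thesis by (simp add: r_def s_def)
next
  case False
  hence npos: "n > 0" by simp
  interpret I: ms n H a by unfold_locales (use herm npos in auto)
  have MM: "M = I.M" by (simp add: M_def I.M_def)
    have Tdef: "main_eigenvalues n H = I.T" by (simp add: I.T_def)
  have finT: "finite I.T" by (rule I.T_finite)
  have mainang: "real n * (main_angle n H \<theta>)^2 = I.c \<theta>" if th: "\<theta> \<in> I.T" for \<theta>
  proof -
    have thS: "\<theta> \<in> I.HH.S" using th I.T_sub by auto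
    show ?thesis unfolding I.c_def
      by (rule ma_props(1)[OF _ I.E_carrier[OF thS] npos]) (simp add: I.E_def I.j_def)
  qed
  show ?thesis
  proof (cases "a = 0")
    case True
    have "M = H" unfolding M_def True
      by (rule eq_matI) (auto simp: ones_mat_def)
    thus ?thesis using finT True Tdef unfolding \<tau>_def \<mu>_def r_def s_def by simp
  next
    case a0: False
    define t where "t = (\<lambda>k. sorted_list_of_set I.T ! k)"
    define w where "w = (\<lambda>k. I.c (t k))"
    have rT: "r = card I.T" by (simp add: r_def Tdef)
    have tT: "t ` {..<r} = I.T" unfolding t_def rT by (rule image_sorted[OF finT])
    have tin: "t k \<in> I.T" if "k < r" for k using tT that by auto
    interpret rs: rootsetup r t w a
    proof
      fix i j assume "i < j" "j < r"
      thus "t i < t j" using strict_sorted_list_of_set[of I.T] finT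
        unfolding t_def rT sorted_wrt_iff_nth_less by simp
    next
      fix k assume "k < r" thus "w k > 0" unfolding w_def using I.c_pos tin by auto
    qed (rule a0)
    obtain m where m: "\<forall>i j. i < j \<longrightarrow> j < r \<longrightarrow> m i < m j"
      "{x. x \<notin> t ` {..<r} \<and> rs.f x = 0} = m ` {..<r}"
      "\<forall>x. x \<notin> t ` {..<r} \<longrightarrow> (\<Prod>k<r. m k - x) = (\<Prod>k<r. t k - x) * rs.f x"
      "a > 0 \<longrightarrow> (\<forall>k<r. t k < m k \<and> (Suc k < r \<longrightarrow> m k < t (Suc k)))"
      "a < 0 \<longrightarrow> (\<forall>k<r. m k < t k \<and> (Suc k < r \<longrightarrow> t k < m (Suc k)))"
      using rs.final_real by blast
    have ff: "rs.f x = I.f x" for x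
    proof -
      have "rs.f x = 1 + a * (\<Sum>k<r. w k / (t k - x))" by (rule rs.f_def)
      also have "(\<Sum>k<r. w k / (t k - x)) = (\<Sum>\<theta>\<in>I.T. I.c \<theta> / (\<theta> - x))"
        unfolding w_def t_def rT by (rule sum_sorted_reindex[OF finT, symmetric])
      finally show ?thesis by (simp add: I.f_def)
    qed
    have mainM: "main_eigenvalues n M = m ` {..<r}"
      unfolding MM I.main_M[OF a0] using m(2) tT ff by simp
    have inj: "inj_on m {..<r}"
      by (rule inj_onI) (metis lessThan_iff m(1) nat_neq_iff less_irrefl)
    have finM: "finite (main_eigenvalues n M)" unfolding mainM by simp
    have sr: "s = r" unfolding s_def mainM using card_image[OF inj] by simp
    have mu_eq: "\<mu> = map m [0..<r]"
      unfolding \<mu>_def mainM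
    proof (subst sorted_list_of_set_unique[symmetric])
      show "finite (m ` {..<r})" by simp
      show "sorted_wrt (<) (map m [0..<r]) \<and> set (map m [0..<r]) = m ` {..<r} \<and>
          length (map m [0..<r]) = card (m ` {..<r})"
        using m(1) card_image[OF inj] by (auto simp: sorted_wrt_iff_nth_less)
    qed
    have mu_i: "\<mu> ! i = m i" if "i < r" for i using that by (simp add: mu_eq)
    have tau_i: "\<tau> ! i = t i" for i by (simp add: \<tau>_def t_def Tdef)
    have ident: "(\<Prod>i<r. \<mu> ! i - x) = (\<Prod>i<r. \<tau> ! i - x) *
            (1 + a * (\<Sum>j<r. real n * (main_angle n H (\<tau> ! j))^2 / (\<tau> ! j - x)))"
      if x: "x \<notin> main_eigenvalues n H" for x
    proof -
      have x': "x \<notin> t ` {..<r}" using x tT Tdef by simp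
      have "(\<Prod>i<r. \<mu> ! i - x) = (\<Prod>k<r. m k - x)" by (intro prod.cong refl) (simp add: mu_i)
      also have "\<dots> = (\<Prod>k<r. t k - x) * rs.f x" using m(3) x' by simp
      also have "rs.f x = 1 + a * (\<Sum>k<r. w k / (t k - x))" by (rule rs.f_def)
      also have "(\<Sum>k<r. w k / (t k - x)) = (\<Sum>j<r. real n * (main_angle n H (\<tau> ! j))^2 / (\<tau> ! j - x))"
        unfolding w_def tau_i by (intro sum.cong refl) (simp add: mainang tin)
      finally show ?thesis by (simp add: tau_i)
    qed
    show ?thesis
      using finT finM sr ident m(4) m(5) Tdef
      by (simp add: mu_i tau_i)
  qed
qed


end
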